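(* A language $L$ is regular if and only if there exists a constant-space verifier $V$ that never flips private coins, flips at most a constant number $r$ of public coins on every input (worst case, $r$ independent of the input), has no bound on its running time, and verifies $L$ with some error $\varepsilon<1/2$. In the class notation below: $\mathrm{IP}^{\mathrm{high}}(\mathrm{constant\ space},\ O(1)\ \mathrm{public\ random\ bits},\ \infty\ \mathrm{time})=\mathrm{REG}$.
   Context: Interactive proof systems. A verifier is a probabilistic Turing machine with a read-only input tape containing $\rhd w\lhd$ ($\rhd,\lhd$ end-markers; head starts on $\rhd$), a read-write work tape (initially blank), and a read-write communication cell shared with a prover (initially blank). Its finite state set has (not necessarily disjoint) subsets of private-coin-flipping states, public-coin-flipping states, and communication states (every public-coin state is a communication state), plus accept and reject states. In each step the verifier reads the input symbol, work-tape symbol and communication-cell symbol; if the state flips a private coin it obtains a fair random bit hidden from the prover; if it flips a public coin it obtains a fair random bit that is also revealed to the prover; the transition function then determines the new state, the symbol written on the work tape, the symbol written to the communication cell (if in a communication state), and moves of the input and work heads (left, right, stay). Each time the verifier writes to the communication cell, the prover overwrites it with a symbol that is an arbitrary (not necessarily computable) function of $w$, the history of public coin outcomes, and the communication symbols written so far; the prover does not see private coins, heads, work tape or state. The verifier halts on entering accept/reject; moving the input head beyond an end-marker (unless entering accept) or the work head off the left end means rejection; it may also run forever. $V$ verifies $L$ with error $\varepsilon=\max(\varepsilon^+,\varepsilon^-)$ where $\varepsilon^+,\varepsilon^-<1/2$ if (i) some prover makes $V$ halt and accept every $w\in L$ with probability at least $1-\varepsilon^+$, and (ii) for every prover and every $w\notin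 L$, $V$ halts and rejects with probability at least $1-\varepsilon^-$. A constant-space verifier uses $O(1)$ work-tape cells. $\mathrm{IP}^{\mathrm{high}}(\ldots)$ denotes the class of languages verifiable with some error $\varepsilon<1/2$ by verifiers obeying the listed resource bounds (given as worst-case functions of the input length $n$; a resource type not listed, here private coins, is unavailable; $\infty$ means unbounded). $\mathrm{REG}$ is the class of regular languages. *)

theory Defs
  imports Complex_Main
begin

definition regular :: "'a list set \<Rightarrow> bool" where
  "regular L \<longleftrightarrow> (\<exists>(Q::nat set) q0 F (d :: nat \<Rightarrow> 'a \<Rightarrow> nat).
      finite Q \<and> q0 \<in> Q \<and> (\<forall>q\<in>Q. \<forall>a. d q a \<in> Q) \<and> L = {w. foldl d q0 w \<in> F})"

datatype move = MLeft | MStay | MRight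

fun mv :: "move \<Rightarrow> int" where
  "mv MLeft = -1" | "mv MStay = 0" | "mv MRight = 1"

datatype status = Running | Accepting | Rejecting

datatype 'a tsym = LEnd | REnd | Sym 'a

text \<open>States, work-tape symbols and communication symbols are encoded as naturals;
  the finite state set and finite alphabets are explicit components. The blank
  symbol of the work tape and of the communication cell is None.
  The transition function gets: current state, input symbol, work symbol,
  communication-cell symbol, and the coin outcome (only meaningful in
  public-coin states; it is False otherwise). It returns: new state,
  symbol written on the work tape, symbol written to the communication cell
  (used only in communication states), input head move, work head move.\<close>
record 'a verifier =
  vstates :: "nat set"
  vinit :: nat
  vpub :: "nat set"
  vcomm :: "nat set"
  vacc :: "nat set"
  vrej :: "nat set"
  vwork :: "nat set"
  vcalph :: "nat set"
  vdelta :: "nat \<Rightarrow> 'a tsym \<Rightarrow> nat option \<Rightarrow> nat option \<Rightarrow> bool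
               \<Rightarrow> nat \<times> nat option \<times> nat option \<times> move \<times> move"

definition wf_verifier :: "'a verifier \<Rightarrow> bool" where
  "wf_verifier V \<longleftrightarrow>
     finite (vstates V) \<and> finite (vwork V) \<and> finite (vcalph V) \<and>
     vinit V \<in> vstates V \<and> vpub V \<subseteq> vcomm V \<and> vcomm V \<subseteq> vstates V \<and>
     vacc V \<subseteq> vstates V \<and> vrej V \<subseteq> vstates V \<and> vacc V \<inter> vrej V = {} \<and>
     (\<forall>q\<in>vstates V. \<forall>a g x b.
        g \<in> insert None (Some ` vwork V) \<longrightarrow> x \<in> insert None (Some ` vcalph V) \<longrightarrow>
        (case vdelta V q a g x b of (q', g', x', _, _) \<Rightarrow>
           q' \<in> vstates V \<and> g' \<in> insert None (Some ` vwork V) \<and>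
           x' \<in> insert None (Some ` vcalph V)))"

text \<open>A prover: a function of the input, the public coin history and the
  sequence of communication symbols written by the verifier so far,
  answering with a symbol of the communication alphabet (or blank).\<close>
type_synonym 'a prover = "'a list \<Rightarrow> bool list \<Rightarrow> nat option list \<Rightarrow> nat option"

definition valid_prover :: "'a verifier \<Rightarrow> 'a prover \<Rightarrow> bool" where
  "valid_prover V P \<longleftrightarrow> (\<forall>w cs xs. P w cs xs \<in> insert None (Some ` vcalph V))"

record config =
  cstat :: status
  cstate :: nat
  cinpos :: int
  ctape :: "nat \<Rightarrow> nat option"
  cwpos :: nat
  ccell :: "nat option"
  ccoins :: "bool list"
  ccomms :: "nat option list"

definition insym :: "'a list \<Rightarrow> int \<Rightarrow> 'a tsym" where
  "insym w i = (if i \<le> 0 then LEnd else if i \<ge> int (length w) + 1 then REnd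
                else Sym (w ! nat (i - 1)))"

definition init_config :: "'a verifier \<Rightarrow> config" where
  "init_config V = \<lparr>cstat = (if vinit V \<in> vacc V then Accepting
                             else if vinit V \<in> vrej V then Rejecting else Running),
     cstate = vinit V, cinpos = 0, ctape = (\<lambda>_. None), cwpos = 0, ccell = None,
     ccoins = [], ccomms = []\<rparr>"

text \<open>One step; the coin stream cs supplies the public coin outcomes in order
  (the k-th public coin flipped is cs k).\<close>
definition step :: "'a verifier \<Rightarrow> 'a list \<Rightarrow> 'a prover \<Rightarrow> (nat \<Rightarrow> bool) \<Rightarrow> config \<Rightarrow> config" where
  "step V w P cs c =
    (if cstat c \<noteq> Running then c else
     (let q = cstate c; pub = (q \<in> vpub V); b = cs (length (ccoins c)) in
      case vdelta V q (insym w (cinpos c)) (ctape c (cwpos c)) (ccell c) (pub \<and> b) of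
        (q', g', x', dI, dW) \<Rightarrow>
          (let coins' = (if pub then ccoins c @ [b] else ccoins c);
               comms' = (if q \<in> vcomm V then ccomms c @ [x'] else ccomms c);
               cell' = (if q \<in> vcomm V then P w coins' comms' else ccell c);
               ip' = cinpos c + mv dI;
               wp' = int (cwpos c) + mv dW;
               st' = (if wp' < 0 then Rejecting
                      else if q' \<in> vacc V then Accepting
                      else if ip' < 0 \<or> ip' > int (length w) + 1 then Rejecting
                      else if q' \<in> vrej V then Rejecting else Running)
           in c\<lparr>cstat := st', cstate := q', cinpos := ip',
                 ctape := (ctape c)(cwpos c := g'), cwpos := nat wp', ccell := cell',
                 ccoins := coins', ccomms := comms'\<rparr>)))"

definition run :: "'a verifier \<Rightarrow> 'a list \<Rightarrow> 'a prover \<Rightarrow> (nat \<Rightarrow> bool) \<Rightarrow> nat \<Rightarrow> config" where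
  "run V w P cs n = (step V w P cs ^^ n) (init_config V)"

definition const_space :: "'a verifier \<Rightarrow> bool" where
  "const_space V \<longleftrightarrow> (\<exists>c::nat. \<forall>w P cs n. valid_prover V P \<longrightarrow> cwpos (run V w P cs n) < c)"

definition coin_bounded :: "'a verifier \<Rightarrow> nat \<Rightarrow> bool" where
  "coin_bounded V r \<longleftrightarrow> (\<forall>w P cs n. valid_prover V P \<longrightarrow> length (ccoins (run V w P cs n)) \<le> r)"

definition stream_of :: "bool list \<Rightarrow> nat \<Rightarrow> bool" where
  "stream_of bs i = (if i < length bs then bs ! i else False)"

text \<open>For a verifier flipping at most r fair coins, the probability of an event
  is the fraction of the 2^r equally likely outcome strings of length r.\<close>
definition acc_prob :: "'a verifier \<Rightarrow> nat \<Rightarrow> 'a list \<Rightarrow> 'a prover \<Rightarrow> real" where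
  "acc_prob V r w P = real (card {bs. length bs = r \<and>
      (\<exists>n. cstat (run V w P (stream_of bs) n) = Accepting)}) / 2 ^ r"

definition rej_prob :: "'a verifier \<Rightarrow> nat \<Rightarrow> 'a list \<Rightarrow> 'a prover \<Rightarrow> real" where
  "rej_prob V r w P = real (card {bs. length bs = r \<and>
      (\<exists>n. cstat (run V w P (stream_of bs) n) = Rejecting)}) / 2 ^ r"

definition verifies :: "'a verifier \<Rightarrow> nat \<Rightarrow> 'a list set \<Rightarrow> real \<Rightarrow> bool" where
  "verifies V r L \<epsilon> \<longleftrightarrow> (\<exists>ep em. ep < 1/2 \<and> em < 1/2 \<and> \<epsilon> = max ep em \<and>
      (\<exists>P. valid_prover V P \<and> (\<forall>w\<in>L. acc_prob V r w P \<ge> 1 - ep)) \<and>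
      (\<forall>P. valid_prover V P \<longrightarrow> (\<forall>w. w \<notin> L \<longrightarrow> rej_prob V r w P \<ge> 1 - em)))"

end

theory Submission
  imports Defs
begin


lemma bekic:
  fixes F :: "'x set \<Rightarrow> 'x set" and A B :: "'x set"
  assumes mono: "mono F"
  defines "Phi \<equiv> \<lambda>Z. lfp (\<lambda>X. F (X \<union> (Z \<inter> B)) \<inter> A)"
  defines "Psi \<equiv> lfp (\<lambda>Z. F (Phi Z \<union> (Z \<inter> B)) \<inter> B)"
  assumes AB: "B = - A"
  shows "lfp F = Phi Psi \<union> Psi" and "Phi Psi \<subseteq> A" and "Psi \<subseteq> B"
proof -
  have mPhi_in: "\<And>Z. mono (\<lambda>X. F (X \<union> (Z \<inter> B)) \<inter> A)"
  proof (rule monoI)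
    fix Z X Y :: "'x set" assume "X \<subseteq> Y"
    then have "X \<union> (Z \<inter> B) \<subseteq> Y \<union> (Z \<inter> B)" by blast
    then have "F (X \<union> (Z \<inter> B)) \<subseteq> F (Y \<union> (Z \<inter> B))" by (rule monoD[OF mono])
    then show "F (X \<union> (Z \<inter> B)) \<inter> A \<subseteq> F (Y \<union> (Z \<inter> B)) \<inter> A" by blast
  qed
  have Phi_mono: "mono Phi"
  proof (rule monoI)
    fix Z1 Z2 :: "'x set" assume Z: "Z1 \<subseteq> Z2"
    show "Phi Z1 \<subseteq> Phi Z2" unfolding Phi_def
    proof (rule lfp_mono)
      fix X :: "'x set"
      have "X \<union> (Z1 \<inter> B) \<subseteq> X \<union> (Z2 \<inter> B)" using Z by blast
      then have "F (X \<union> (Z1 \<inter> B)) \<subseteq> F (X \<union> (Z2 \<inter> B))" by (rule monoD[OF mono])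
      then show "F (X \<union> (Z1 \<inter> B)) \<inter> A \<subseteq> F (X \<union> (Z2 \<inter> B)) \<inter> A" by blast
    qed
  qed
  have mPsi: "mono (\<lambda>Z. F (Phi Z \<union> (Z \<inter> B)) \<inter> B)"
  proof (rule monoI)
    fix Z1 Z2 :: "'x set" assume Z: "Z1 \<subseteq> Z2"
    have "Phi Z1 \<subseteq> Phi Z2" using Z by (rule monoD[OF Phi_mono])
    then have "Phi Z1 \<union> (Z1 \<inter> B) \<subseteq> Phi Z2 \<union> (Z2 \<inter> B)" using Z by blast
    then have "F (Phi Z1 \<union> (Z1 \<inter> B)) \<subseteq> F (Phi Z2 \<union> (Z2 \<inter> B))" by (rule monoD[OF mono])
    then show "F (Phi Z1 \<union> (Z1 \<inter> B)) \<inter> B \<subseteq> F (Phi Z2 \<union> (Z2 \<inter> B)) \<inter> B" by blast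
  qed
  have PhiA: "\<And>Z. Phi Z \<subseteq> A"
    unfolding Phi_def by (subst lfp_unfold[OF mPhi_in]) blast
  have PsiB: "Psi \<subseteq> B"
    unfolding Psi_def by (subst lfp_unfold[OF mPsi]) blast
  show "Phi Psi \<subseteq> A" "Psi \<subseteq> B" using PhiA PsiB by auto
  define W where "W = lfp F"
  have W: "F W = W" unfolding W_def using lfp_unfold[OF mono] by simp
  have P1: "Phi (W \<inter> B) \<subseteq> W \<inter> A"
    unfolding Phi_def
  proof (rule lfp_lowerbound)
    have "W \<inter> A \<union> (W \<inter> B \<inter> B) = W" using AB by blast
    then show "F (W \<inter> A \<union> (W \<inter> B \<inter> B)) \<inter> A \<subseteq> W \<inter> A" using W by simp
  qed
  have P2: "Psi \<subseteq> W \<inter> B"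
    unfolding Psi_def
  proof (rule lfp_lowerbound)
    have "Phi (W \<inter> B) \<union> (W \<inter> B \<inter> B) \<subseteq> W" using P1 by blast
    then have "F (Phi (W \<inter> B) \<union> (W \<inter> B \<inter> B)) \<subseteq> F W" by (rule monoD[OF mono])
    then show "F (Phi (W \<inter> B) \<union> (W \<inter> B \<inter> B)) \<inter> B \<subseteq> W \<inter> B" using W by auto
  qed
  have "Phi Psi \<subseteq> Phi (W \<inter> B)" using P2 by (intro monoD[OF Phi_mono]) blast
  then have "Phi Psi \<union> Psi \<subseteq> W" using P1 P2 by blast
  moreover have "W \<subseteq> Phi Psi \<union> Psi"
    unfolding W_def
  proof (rule lfp_lowerbound)
    have e1: "Phi Psi = F (Phi Psi \<union> Psi) \<inter> A"
      using lfp_unfold[OF mPhi_in, of Psi] PsiB unfolding Phi_def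
      by (metis Int_absorb2)
    have e2: "Psi = F (Phi Psi \<union> Psi) \<inter> B"
      using lfp_unfold[OF mPsi] PsiB unfolding Psi_def[symmetric]
      by (metis Int_absorb2)
    show "F (Phi Psi \<union> Psi) \<subseteq> Phi Psi \<union> Psi"
      using e1 e2 AB by blast
  qed
  ultimately show "lfp F = Phi Psi \<union> Psi" unfolding W_def by blast
qed


type_synonym lc = "nat \<times> (nat \<Rightarrow> nat option) \<times> nat \<times> nat option \<times> nat"

definition resp :: "'a verifier \<Rightarrow> nat option set" where
  "resp V = insert None (Some ` vcalph V)"

definition lck :: "lc \<Rightarrow> nat" where "lck \<sigma> = snd (snd (snd (snd \<sigma>)))"

definition goodlc :: "'a verifier \<Rightarrow> nat \<Rightarrow> nat \<Rightarrow> lc \<Rightarrow> bool" where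
  "goodlc V cb r \<sigma> = (case \<sigma> of (q,t,p,x,k) \<Rightarrow> q \<in> vstates V \<and> p < cb \<and>
     (\<forall>j. t j \<in> insert None (Some ` vwork V)) \<and> (\<forall>j. cb \<le> j \<longrightarrow> t j = None) \<and>
     x \<in> resp V \<and> k \<le> r)"

definition okpos :: "'a verifier \<Rightarrow> nat \<Rightarrow> nat \<Rightarrow> lc \<Rightarrow> bool list set \<Rightarrow> bool" where
  "okpos V cb r \<sigma> S = (goodlc V cb r \<sigma> \<and> (\<forall>bs\<in>S. length bs \<le> r))"

definition lstep :: "'a verifier \<Rightarrow> 'a tsym \<Rightarrow> lc \<Rightarrow> nat option \<Rightarrow> bool \<Rightarrow> move \<times> int \<times> lc" where
  "lstep V a \<sigma> y b = (case \<sigma> of (q,t,p,x,k) \<Rightarrow>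
     (case vdelta V q a (t p) x (q \<in> vpub V \<and> b) of (q',g',x',dI,dW) \<Rightarrow>
       (dI, int p + mv dW, (q', t(p := g'), nat (int p + mv dW),
          if q \<in> vcomm V then y else x, if q \<in> vpub V then Suc k else k))))"

definition gmv :: "'a list \<Rightarrow> int \<Rightarrow> int \<Rightarrow> move \<Rightarrow> int option" where
  "gmv w s z d = (if z + mv d + s < 0 \<or> z + mv d + s > int (length w) + 1 then None else Some (z + mv d))"

type_synonym gpos = "int \<times> lc \<times> bool list set"

definition gok :: "'a verifier \<Rightarrow> nat \<Rightarrow> nat \<Rightarrow> 'a list \<Rightarrow> int \<Rightarrow> gpos set \<Rightarrow> int \<Rightarrow> lc
   \<Rightarrow> nat option \<Rightarrow> bool \<Rightarrow> bool list set \<Rightarrow> bool" where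
  "gok V cb r w s X z \<sigma> y b S' = (case lstep V (insym w (z + s)) \<sigma> y b of (dI, wp, \<sigma>') \<Rightarrow>
     S' = {} \<or> (0 \<le> wp \<and> fst \<sigma>' \<in> vacc V) \<or>
     (0 \<le> wp \<and> fst \<sigma>' \<notin> vacc V \<and> fst \<sigma>' \<notin> vrej V \<and>
       (\<exists>z'. gmv w s z dI = Some z' \<and> (z', \<sigma>', S') \<in> X \<and> okpos V cb r \<sigma>' S')))"

definition GF :: "'a verifier \<Rightarrow> nat \<Rightarrow> nat \<Rightarrow> 'a list \<Rightarrow> int \<Rightarrow> gpos set \<Rightarrow> gpos set" where
  "GF V cb r w s X = {(z,\<sigma>,S). 0 \<le> z + s \<and> z + s \<le> int (length w) + 1 \<and> okpos V cb r \<sigma> S \<and>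
     (if fst \<sigma> \<in> vpub V then lck \<sigma> < r \<and> [] \<notin> S \<and>
         (\<forall>b. \<exists>y\<in>resp V. gok V cb r w s X z \<sigma> y b {bs. b # bs \<in> S})
      else (\<exists>y\<in>resp V. gok V cb r w s X z \<sigma> y False S))}"

lemma GF_mem: "(z,\<sigma>,S) \<in> GF V cb r w s X \<longleftrightarrow> 0 \<le> z + s \<and> z + s \<le> int (length w) + 1 \<and> okpos V cb r \<sigma> S \<and>
     (if fst \<sigma> \<in> vpub V then lck \<sigma> < r \<and> [] \<notin> S \<and>
         (\<forall>b. \<exists>y\<in>resp V. gok V cb r w s X z \<sigma> y b {bs. b # bs \<in> S})
      else (\<exists>y\<in>resp V. gok V cb r w s X z \<sigma> y False S))"
  unfolding GF_def by simp

lemma gok_mono: "X \<subseteq> Y \<Longrightarrow> gok V cb r w s X z \<sigma> y b S' \<Longrightarrow> gok V cb r w s Y z \<sigma> y b S'"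
  unfolding gok_def by (auto split: prod.splits)

lemma GF_mono: "mono (GF V cb r w s)"
proof (rule monoI)
  fix X Y :: "gpos set" assume "X \<subseteq> Y"
  then have g: "\<And>z \<sigma> y b S'. gok V cb r w s X z \<sigma> y b S' \<Longrightarrow> gok V cb r w s Y z \<sigma> y b S'"
    by (rule gok_mono)
  show "GF V cb r w s X \<subseteq> GF V cb r w s Y"
  proof
    fix e assume "e \<in> GF V cb r w s X"
    then show "e \<in> GF V cb r w s Y" unfolding GF_def using g
      by (cases e) (simp split: if_splits; meson)
  qed
qed

lemma GF_okpos: "(z,\<sigma>,S) \<in> GF V cb r w s X \<Longrightarrow> okpos V cb r \<sigma> S"
  unfolding GF_def by auto

lemma mv_abs: "\<bar>mv d\<bar> \<le> 1"
  by (cases d) auto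

lemma gmv_near: "gmv w s z d = Some z' \<Longrightarrow> \<bar>z' - z\<bar> \<le> 1"
  unfolding gmv_def using mv_abs[of d] by (auto split: if_splits)

lemma gok_cong:
  assumes "\<And>z' \<sigma>' S'. \<bar>z' - z\<bar> \<le> 1 \<Longrightarrow> okpos V cb r \<sigma>' S' \<Longrightarrow> (z',\<sigma>',S') \<in> X \<longleftrightarrow> (z',\<sigma>',S') \<in> Y"
  shows "gok V cb r w s X z \<sigma> y b S' = gok V cb r w s Y z \<sigma> y b S'"
  unfolding gok_def using assms gmv_near by (auto split: prod.splits) blast+

lemma GF_cong:
  assumes "\<And>z' \<sigma>' S'. \<bar>z' - z\<bar> \<le> 1 \<Longrightarrow> okpos V cb r \<sigma>' S' \<Longrightarrow> (z',\<sigma>',S') \<in> X \<longleftrightarrow> (z',\<sigma>',S') \<in> Y"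
  shows "(z,\<sigma>,S) \<in> GF V cb r w s X \<longleftrightarrow> (z,\<sigma>,S) \<in> GF V cb r w s Y"
proof -
  have "\<And>y b S'. gok V cb r w s X z \<sigma> y b S' = gok V cb r w s Y z \<sigma> y b S'"
    by (rule gok_cong) (use assms in auto)
  then show ?thesis unfolding GF_def by simp
qed

lemma gok_transfer:
  assumes "insym w (z + s) = insym w' (z + s')" "\<And>d. gmv w s z d = gmv w' s' z d"
  shows "gok V cb r w s X z \<sigma> y b S' = gok V cb r w' s' X z \<sigma> y b S'"
  unfolding gok_def using assms by simp

lemma GF_transfer:
  assumes "insym w (z + s) = insym w' (z + s')" "\<And>d. gmv w s z d = gmv w' s' z d"
    "(0 \<le> z + s \<and> z + s \<le> int (length w) + 1) = (0 \<le> z + s' \<and> z + s' \<le> int (length w') + 1)"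
  shows "(z,\<sigma>,S) \<in> GF V cb r w s X \<longleftrightarrow> (z,\<sigma>,S) \<in> GF V cb r w' s' X"
  unfolding GF_def using gok_transfer[OF assms(1,2)] assms(3) by (simp; blast)

lemma insym_right:
  assumes "z \<ge> 1" shows "insym (u @ v) (z + int (length u)) = insym v (z + 0)"
proof -
  have e: "nat (z + int (length u) - 1) = length u + nat (z - 1)" using assms by auto
  show ?thesis using assms unfolding insym_def by (auto simp: e nth_append)
qed

lemma insym_left:
  assumes "z \<le> 0" shows "insym (u @ v) (z + int (length u)) = insym u (z + int (length u))"
  using assms unfolding insym_def
  by (auto simp: nth_append)

lemma gmv_right: "z \<ge> 1 \<Longrightarrow> gmv (u @ v) (int (length u)) z d = gmv v 0 z d"
  unfolding gmv_def using mv_abs[of d] by auto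

lemma gmv_left: "z \<le> 0 \<Longrightarrow> gmv (u @ v) (int (length u)) z d = gmv u (int (length u)) z d"
  unfolding gmv_def using mv_abs[of d] by auto

lemma GF_right: "z \<ge> 1 \<Longrightarrow> (z,\<sigma>,S) \<in> GF V cb r (u @ v) (int (length u)) X \<longleftrightarrow> (z,\<sigma>,S) \<in> GF V cb r v 0 X"
  apply (rule GF_transfer)
  using insym_right gmv_right by auto

lemma GF_left: "z \<le> 0 \<Longrightarrow> (z,\<sigma>,S) \<in> GF V cb r (u @ v) (int (length u)) X \<longleftrightarrow> (z,\<sigma>,S) \<in> GF V cb r u (int (length u)) X"
  apply (rule GF_transfer)
  using insym_left gmv_left by auto

definition GA :: "gpos set" where "GA = {e. fst e \<le> 0}"
definition GB :: "gpos set" where "GB = - GA"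

definition WW :: "'a verifier \<Rightarrow> nat \<Rightarrow> nat \<Rightarrow> 'a list \<Rightarrow> int \<Rightarrow> gpos set" where
  "WW V cb r w s = lfp (GF V cb r w s)"

definition PhiU :: "'a verifier \<Rightarrow> nat \<Rightarrow> nat \<Rightarrow> 'a list \<Rightarrow> gpos set \<Rightarrow> gpos set" where
  "PhiU V cb r u Z = lfp (\<lambda>X. GF V cb r u (int (length u)) (X \<union> (Z \<inter> GB)) \<inter> GA)"

definition liftY :: "(lc \<times> bool list set) set \<Rightarrow> gpos set" where
  "liftY Y = (\<lambda>p. (1, fst p, snd p)) ` Y"

definition Bdry :: "'a verifier \<Rightarrow> nat \<Rightarrow> nat \<Rightarrow> (lc \<times> bool list set) set" where
  "Bdry V cb r = {(\<sigma>, S). okpos V cb r \<sigma> S}"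

definition Yof :: "'a verifier \<Rightarrow> nat \<Rightarrow> nat \<Rightarrow> gpos set \<Rightarrow> (lc \<times> bool list set) set" where
  "Yof V cb r Z = {(\<sigma>, S). okpos V cb r \<sigma> S \<and> (1, \<sigma>, S) \<in> Z}"

definition sig0 :: "'a verifier \<Rightarrow> lc" where
  "sig0 V = (vinit V, \<lambda>_. None, 0, None, 0)"

definition gtyp :: "'a verifier \<Rightarrow> nat \<Rightarrow> nat \<Rightarrow> 'a list \<Rightarrow> ((lc \<times> bool list set) set \<times> bool \<times> lc \<times> bool list set) set" where
  "gtyp V cb r u = {(Y, bnd, \<sigma>, S). Y \<subseteq> Bdry V cb r \<and>
     (if bnd then (0, \<sigma>, S) \<in> PhiU V cb r u (liftY Y)
      else \<sigma> = sig0 V \<and> (- int (length u), \<sigma>, S) \<in> PhiU V cb r u (liftY Y))}"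

lemma liftY_mem[simp]: "(z,\<sigma>,S) \<in> liftY Y \<longleftrightarrow> z = 1 \<and> (\<sigma>,S) \<in> Y"
  unfolding liftY_def by force

lemma Yof_mem[simp]: "(\<sigma>,S) \<in> Yof V cb r Z \<longleftrightarrow> okpos V cb r \<sigma> S \<and> (1,\<sigma>,S) \<in> Z"
  unfolding Yof_def by auto

lemma mono_restr: "mono (\<lambda>X. GF V cb r w s (X \<union> Z) \<inter> A)"
proof (rule monoI)
  fix X Y :: "gpos set" assume "X \<subseteq> Y"
  then have "X \<union> Z \<subseteq> Y \<union> Z" by blast
  then have "GF V cb r w s (X \<union> Z) \<subseteq> GF V cb r w s (Y \<union> Z)" by (rule monoD[OF GF_mono])
  then show "GF V cb r w s (X \<union> Z) \<inter> A \<subseteq> GF V cb r w s (Y \<union> Z) \<inter> A" by blast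
qed

lemma PhiU_A: "PhiU V cb r u Z \<subseteq> GA"
  unfolding PhiU_def by (subst lfp_unfold[OF mono_restr]) blast

lemma PhiU_ok: "(z,\<sigma>,S) \<in> PhiU V cb r u Z \<Longrightarrow> okpos V cb r \<sigma> S"
  unfolding PhiU_def by (subst (asm) lfp_unfold[OF mono_restr]) (blast dest: GF_okpos)

lemma PhiU_Yof: "PhiU V cb r u Z = PhiU V cb r u (liftY (Yof V cb r Z))"
proof -
  have "GF V cb r u (int (length u)) (X \<union> (Z \<inter> GB)) \<inter> GA =
        GF V cb r u (int (length u)) (X \<union> (liftY (Yof V cb r Z) \<inter> GB)) \<inter> GA" for X
  proof (intro set_eqI)
    fix e :: gpos
    obtain z \<sigma> S where e: "e = (z,\<sigma>,S)" by (cases e) auto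
    show "e \<in> GF V cb r u (int (length u)) (X \<union> (Z \<inter> GB)) \<inter> GA \<longleftrightarrow>
          e \<in> GF V cb r u (int (length u)) (X \<union> (liftY (Yof V cb r Z) \<inter> GB)) \<inter> GA"
    proof (cases "z \<le> 0")
      case True
      have "(z,\<sigma>,S) \<in> GF V cb r u (int (length u)) (X \<union> (Z \<inter> GB)) \<longleftrightarrow>
          (z,\<sigma>,S) \<in> GF V cb r u (int (length u)) (X \<union> (liftY (Yof V cb r Z) \<inter> GB))"
      proof (rule GF_cong)
        fix z' \<sigma>' S'
        show "\<bar>z' - z\<bar> \<le> 1 \<Longrightarrow> okpos V cb r \<sigma>' S' \<Longrightarrow> (z',\<sigma>',S') \<in> X \<union> (Z \<inter> GB) \<longleftrightarrow> (z',\<sigma>',S') \<in> X \<union> (liftY (Yof V cb r Z) \<inter> GB)"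
        proof -
          assume a: "\<bar>z' - z\<bar> \<le> 1" "okpos V cb r \<sigma>' S'"
          show ?thesis
          proof (cases "z' \<le> 0")
            case True then show ?thesis unfolding GB_def GA_def by auto
          next
            case False then have "z' = 1" using a(1) \<open>z \<le> 0\<close> by auto
            then show ?thesis using a(2) unfolding GB_def GA_def by auto
          qed
        qed
      qed
      then show ?thesis using e by auto
    next
      case False then show ?thesis using e unfolding GA_def by auto
    qed
  qed
  then show ?thesis unfolding PhiU_def by simp
qed

lemma PhiU_bnd: "(0,\<sigma>,S) \<in> PhiU V cb r u Z \<longleftrightarrow> (Yof V cb r Z, True, \<sigma>, S) \<in> gtyp V cb r u"
  unfolding gtyp_def using PhiU_Yof[of V cb r u Z] by (auto simp: Yof_def Bdry_def)

lemma PhiU_init: "(- int (length u), sig0 V, S) \<in> PhiU V cb r u Z \<longleftrightarrow> (Yof V cb r Z, False, sig0 V, S) \<in> gtyp V cb r u"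
  unfolding gtyp_def using PhiU_Yof[of V cb r u Z] by (auto simp: Yof_def Bdry_def)

definition PsiV :: "'a verifier \<Rightarrow> nat \<Rightarrow> nat \<Rightarrow> 'a list \<Rightarrow> 'a list \<Rightarrow> gpos set" where
  "PsiV V cb r u v = lfp (\<lambda>Z. GF V cb r v 0 (PhiU V cb r u Z \<union> (Z \<inter> GB)) \<inter> GB)"

lemma WW_split:
  "WW V cb r (u @ v) (int (length u)) = PhiU V cb r u (PsiV V cb r u v) \<union> PsiV V cb r u v"
  "PsiV V cb r u v \<subseteq> GB"
proof -
  let ?F = "GF V cb r (u @ v) (int (length u))"
  have FA: "?F Y \<inter> GA = GF V cb r u (int (length u)) Y \<inter> GA" for Y
    apply (rule set_eqI) subgoal for e by (cases e) (auto simp: GA_def GF_left) done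
  have FB: "?F Y \<inter> GB = GF V cb r v 0 Y \<inter> GB" for Y
    apply (rule set_eqI) subgoal for e by (cases e) (auto simp: GA_def GB_def GF_right) done
  have Phi: "lfp (\<lambda>X. ?F (X \<union> (Z \<inter> GB)) \<inter> GA) = PhiU V cb r u Z" for Z
    unfolding PhiU_def FA ..
  have Psi: "lfp (\<lambda>Z. ?F (PhiU V cb r u Z \<union> (Z \<inter> GB)) \<inter> GB) = PsiV V cb r u v"
    unfolding FB PsiV_def ..
  note bk = bekic[OF GF_mono[of V cb r "u @ v" "int (length u)"] GB_def]
  show "WW V cb r (u @ v) (int (length u)) = PhiU V cb r u (PsiV V cb r u v) \<union> PsiV V cb r u v"
    using bk(1) unfolding WW_def Phi Psi .
  show "PsiV V cb r u v \<subseteq> GB" using bk(3) unfolding Phi Psi .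
qed

lemma PsiV_typ:
  assumes "gtyp V cb r u = gtyp V cb r u'"
  shows "PsiV V cb r u v = PsiV V cb r u' v"
proof -
  have "GF V cb r v 0 (PhiU V cb r u Z \<union> (Z \<inter> GB)) \<inter> GB = GF V cb r v 0 (PhiU V cb r u' Z \<union> (Z \<inter> GB)) \<inter> GB" for Z
  proof (intro set_eqI)
    fix e :: gpos
    obtain z \<sigma> S where e: "e = (z,\<sigma>,S)" by (cases e) auto
    show "e \<in> GF V cb r v 0 (PhiU V cb r u Z \<union> (Z \<inter> GB)) \<inter> GB \<longleftrightarrow> e \<in> GF V cb r v 0 (PhiU V cb r u' Z \<union> (Z \<inter> GB)) \<inter> GB"
    proof (cases "z \<ge> 1")
      case True
      have "(z,\<sigma>,S) \<in> GF V cb r v 0 (PhiU V cb r u Z \<union> (Z \<inter> GB)) \<longleftrightarrow> (z,\<sigma>,S) \<in> GF V cb r v 0 (PhiU V cb r u' Z \<union> (Z \<inter> GB))"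
      proof (rule GF_cong)
        fix z' \<sigma>' S' assume "\<bar>z' - z\<bar> \<le> 1" "okpos V cb r \<sigma>' S'"
        then have "z' = 0 \<or> z' \<ge> 1" using True by auto
        then show "(z',\<sigma>',S') \<in> PhiU V cb r u Z \<union> (Z \<inter> GB) \<longleftrightarrow> (z',\<sigma>',S') \<in> PhiU V cb r u' Z \<union> (Z \<inter> GB)"
        proof
          assume "z' = 0" then show ?thesis using PhiU_bnd[where V=V and cb=cb and r=r and u=u and Z=Z] PhiU_bnd[where V=V and cb=cb and r=r and u=u' and Z=Z] assms
            by (auto simp: GB_def GA_def)
        next
          assume "z' \<ge> 1" then show ?thesis using PhiU_A[where V=V and cb=cb and r=r and u=u and Z=Z] PhiU_A[where V=V and cb=cb and r=r and u=u' and Z=Z]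
            by (auto simp: GA_def)
        qed
      qed
      then show ?thesis using e by auto
    next
      case False then show ?thesis using e unfolding GB_def GA_def by auto
    qed
  qed
  then show ?thesis unfolding PsiV_def by simp
qed

lemma WW_typ:
  assumes "gtyp V cb r u = gtyp V cb r u'"
  shows "(- int (length u), sig0 V, S) \<in> WW V cb r (u @ v) (int (length u)) \<longleftrightarrow>
         (- int (length u'), sig0 V, S) \<in> WW V cb r (u' @ v) (int (length u'))"
proof -
  have "(- int (length x), sig0 V, S) \<in> WW V cb r (x @ v) (int (length x)) \<longleftrightarrow>
        (Yof V cb r (PsiV V cb r x v), False, sig0 V, S) \<in> gtyp V cb r x" for x
  proof -
    have n: "(- int (length x), sig0 V, S) \<notin> PsiV V cb r x v"
      using WW_split(2)[of V cb r x v] unfolding GB_def GA_def by auto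
    have "(- int (length x), sig0 V, S) \<in> WW V cb r (x @ v) (int (length x)) \<longleftrightarrow>
          (- int (length x), sig0 V, S) \<in> PhiU V cb r x (PsiV V cb r x v)"
      unfolding WW_split(1)[of V cb r x v] using n by blast
    then show ?thesis using PhiU_init[where u=x and V=V and S=S and cb=cb and r=r and Z="PsiV V cb r x v"] by blast
  qed
  then show ?thesis using assms PsiV_typ[OF assms, of v] by metis
qed


lemma finite_Bdry:
  assumes "finite (vstates V)" "finite (vwork V)" "finite (vcalph V)"
  shows "finite (Bdry V cb r)"
proof -
  let ?T = "{t :: nat \<Rightarrow> nat option. \<forall>j. (j \<in> {..<cb} \<longrightarrow> t j \<in> insert None (Some ` vwork V)) \<and> (j \<notin> {..<cb} \<longrightarrow> t j = None)}"
  have fT: "finite ?T" by (rule finite_set_of_finite_funs) (use assms in auto)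
  have fB: "finite {bs :: bool list. set bs \<subseteq> UNIV \<and> length bs \<le> r}" by (rule finite_lists_length_le) auto
  have "Bdry V cb r \<subseteq> (vstates V \<times> ?T \<times> {..<cb} \<times> resp V \<times> {..r}) \<times> Pow {bs :: bool list. set bs \<subseteq> UNIV \<and> length bs \<le> r}"
    unfolding Bdry_def okpos_def goodlc_def by auto
  moreover have "finite ((vstates V \<times> ?T \<times> {..<cb} \<times> resp V \<times> {..r}) \<times> Pow {bs :: bool list. set bs \<subseteq> UNIV \<and> length bs \<le> r})"
    using assms fT fB unfolding resp_def by auto
  ultimately show ?thesis by (rule finite_subset)
qed

lemma finite_gtyp_range:
  assumes "finite (vstates V)" "finite (vwork V)" "finite (vcalph V)"
  shows "finite (range (gtyp V cb r))"
proof -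
  have "range (gtyp V cb r) \<subseteq> Pow (Pow (Bdry V cb r) \<times> UNIV \<times> Bdry V cb r)"
    unfolding gtyp_def by (auto simp: Bdry_def dest: PhiU_ok split: if_splits)
  moreover have "finite (Pow (Pow (Bdry V cb r) \<times> (UNIV::bool set) \<times> Bdry V cb r))"
    using finite_Bdry[OF assms] by auto
  ultimately show ?thesis by (rule finite_subset)
qed


definition absc :: "config \<Rightarrow> lc" where
  "absc c = (cstate c, ctape c, cwpos c, ccell c, length (ccoins c))"

definition stat_of :: "'a verifier \<Rightarrow> 'a list \<Rightarrow> int \<Rightarrow> int \<Rightarrow> nat \<Rightarrow> status" where
  "stat_of V w ip wp q' = (if wp < 0 then Rejecting else if q' \<in> vacc V then Accepting
      else if ip < 0 \<or> ip > int (length w) + 1 then Rejecting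
      else if q' \<in> vrej V then Rejecting else Running)"

lemma step_char:
  assumes "cstat c = Running"
  shows "case lstep V (insym w (cinpos c)) (absc c) (ccell (step V w P cs c)) (cs (length (ccoins c))) of
     (dI, wp, \<sigma>') \<Rightarrow> absc (step V w P cs c) = \<sigma>' \<and> cinpos (step V w P cs c) = cinpos c + mv dI \<and>
        cstat (step V w P cs c) = stat_of V w (cinpos c + mv dI) wp (fst \<sigma>')"
proof -
  obtain q' g' x' dI dW where d: "vdelta V (cstate c) (insym w (cinpos c)) (ctape c (cwpos c)) (ccell c)
      (cstate c \<in> vpub V \<and> cs (length (ccoins c))) = (q', g', x', dI, dW)" by (metis prod_cases5)
  show ?thesis using assms d unfolding step_def lstep_def absc_def stat_of_def Let_def by simp
qed

lemma step_coins:
  "ccoins (step V w P cs c) = (if cstat c = Running \<and> cstate c \<in> vpub V then ccoins c @ [cs (length (ccoins c))] else ccoins c)"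
  unfolding step_def Let_def by (auto split: prod.splits)

lemma step_comms_len:
  "length (ccomms (step V w P cs c)) = (if cstat c = Running \<and> cstate c \<in> vcomm V then Suc (length (ccomms c)) else length (ccomms c))"
  unfolding step_def Let_def by (auto split: prod.splits)

lemma step_halted: "cstat c \<noteq> Running \<Longrightarrow> step V w P cs c = c"
  unfolding step_def by simp

lemma funpow_halted: "cstat c \<noteq> Running \<Longrightarrow> (step V w P cs ^^ n) c = c"
  by (induction n) (auto simp: step_halted)

lemma step_stream_cong:
  assumes "cstat c = Running \<Longrightarrow> cstate c \<in> vpub V \<Longrightarrow> cs (length (ccoins c)) = cs' (length (ccoins c))"
  shows "step V w P cs c = step V w P cs' c"
  using assms unfolding step_def Let_def by (cases "cstate c \<in> vpub V") (auto split: prod.splits)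

lemma step_prover_cong:
  assumes "cstat c = Running \<Longrightarrow> cstate c \<in> vcomm V \<Longrightarrow>
     \<forall>xs. length xs = Suc (length (ccomms c)) \<longrightarrow>
       P1 w (if cstate c \<in> vpub V then ccoins c @ [cs (length (ccoins c))] else ccoins c) xs =
       P2 w (if cstate c \<in> vpub V then ccoins c @ [cs (length (ccoins c))] else ccoins c) xs"
  shows "step V w P1 cs c = step V w P2 cs c"
proof (cases "cstat c = Running")
  case False then show ?thesis by (simp add: step_halted)
next
  case True
  obtain q' g' x' dI dW where d: "vdelta V (cstate c) (insym w (cinpos c)) (ctape c (cwpos c)) (ccell c)
      (cstate c \<in> vpub V \<and> cs (length (ccoins c))) = (q', g', x', dI, dW)" by (metis prod_cases5)
  let ?co = "if cstate c \<in> vpub V then ccoins c @ [cs (length (ccoins c))] else ccoins c"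
  have e: "cstate c \<in> vcomm V \<Longrightarrow> P1 w ?co (ccomms c @ [x']) = P2 w ?co (ccomms c @ [x'])"
    using assms True by simp
  show ?thesis
  proof (cases "cstate c \<in> vcomm V")
    case cm: True
    show ?thesis using True d e[OF cm] cm unfolding step_def Let_def by simp
  next
    case False
    show ?thesis using True d False unfolding step_def Let_def by simp
  qed
qed

lemma lstep_y: "fst \<sigma> \<notin> vcomm V \<Longrightarrow> lstep V a \<sigma> y b = lstep V a \<sigma> y' b"
  unfolding lstep_def by (auto split: prod.splits)

lemma fps: "(f ^^ Suc n) x = (f ^^ n) (f x)"
  by (metis comp_apply funpow_Suc_right)

lemma run_agree:
  assumes "\<forall>cs' xs'. m < length xs' \<longrightarrow> take (length h) cs' = h \<longrightarrow> P1 w cs' xs' = P2 w cs' xs'"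
    and "m \<le> length (ccomms c)" and "take (length h) (ccoins c) = h"
  shows "(step V w P1 cs ^^ n) c = (step V w P2 cs ^^ n) c"
  using assms(2,3)
proof (induction n arbitrary: c)
  case 0 then show ?case by simp
next
  case (Suc n)
  have "length (take (length h) (ccoins c)) = length h" using Suc.prems(2) by simp
  then have lh: "length h \<le> length (ccoins c)" by simp
  let ?co = "if cstate c \<in> vpub V then ccoins c @ [cs (length (ccoins c))] else ccoins c"
  have tco: "take (length h) ?co = h" using lh Suc.prems(2) by simp
  have e: "step V w P1 cs c = step V w P2 cs c"
  proof (rule step_prover_cong)
    show "\<forall>xs. length xs = Suc (length (ccomms c)) \<longrightarrow> P1 w ?co xs = P2 w ?co xs"
    proof (intro allI impI)
      fix xs :: "nat option list" assume "length xs = Suc (length (ccomms c))"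
      then have "m < length xs" using Suc.prems(1) by simp
      then show "P1 w ?co xs = P2 w ?co xs" using assms(1) tco by blast
    qed
  qed
  have "m \<le> length (ccomms (step V w P2 cs c))" using Suc.prems step_comms_len[of V w P2 cs c] by auto
  moreover have "take (length h) (ccoins (step V w P2 cs c)) = h" using Suc.prems lh step_coins[of V w P2 cs c] by auto
  ultimately show ?case using Suc.IH e by (simp del: funpow.simps add: fps)
qed

lemma stream_of_at: "stream_of (xs @ b # ys) (length xs) = b"
  unfolding stream_of_def by (simp add: nth_append)

definition Good :: "'a verifier \<Rightarrow> 'a list \<Rightarrow> int \<Rightarrow> gpos set" where
  "Good V w s = {(z,\<sigma>,S). \<forall>c. cstat c = Running \<longrightarrow> cinpos c = z + s \<longrightarrow> absc c = \<sigma> \<longrightarrow>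
     (\<exists>P. valid_prover V P \<and> (\<forall>bs\<in>S. \<exists>n. cstat ((step V w P (stream_of (ccoins c @ bs)) ^^ n) c) = Accepting))}"

lemma valid_const: "y \<in> resp V \<Longrightarrow> valid_prover V (\<lambda>_ _ _. y)"
  unfolding valid_prover_def resp_def by auto

lemma branch_back:
  assumes g: "gok V cb r w s (Good V w s) z \<sigma> y b S'" and y: "y \<in> resp V"
    and c: "cstat c = Running" "cinpos c = z + s" "absc c = \<sigma>"
  defines "c' \<equiv> step V w (\<lambda>_ _ _. y) (stream_of (ccoins c @ [b])) c"
  shows "\<exists>P'. valid_prover V P' \<and> (\<forall>bs'\<in>S'. \<exists>n. cstat ((step V w P' (stream_of (ccoins c' @ bs')) ^^ n) c') = Accepting)"
proof -
  have sb: "stream_of (ccoins c @ [b]) (length (ccoins c)) = b" using stream_of_at[of "ccoins c" b "[]"] by simp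
  have ch: "case lstep V (insym w (cinpos c)) (absc c) (ccell c') b of
     (dI, wp, \<sigma>') \<Rightarrow> absc c' = \<sigma>' \<and> cinpos c' = cinpos c + mv dI \<and>
        cstat c' = stat_of V w (cinpos c + mv dI) wp (fst \<sigma>')"
    using step_char[OF c(1), of V w "\<lambda>_ _ _. y" "stream_of (ccoins c @ [b])"] sb unfolding c'_def by simp
  have cell: "lstep V (insym w (cinpos c)) (absc c) (ccell c') b = lstep V (insym w (cinpos c)) (absc c) y b"
  proof (cases "cstate c \<in> vcomm V")
    case True then have "ccell c' = y" unfolding c'_def step_def Let_def using c(1) by (auto split: prod.splits)
    then show ?thesis by simp
  next
    case False then show ?thesis by (intro lstep_y) (simp add: absc_def)
  qed
  obtain dI wp \<sigma>' where ls: "lstep V (insym w (z + s)) \<sigma> y b = (dI, wp, \<sigma>')" by (metis prod_cases3)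
  have ch2: "absc c' = \<sigma>' \<and> cinpos c' = z + s + mv dI \<and> cstat c' = stat_of V w (z + s + mv dI) wp (fst \<sigma>')"
    using ch cell ls c by simp
  have g2: "S' = {} \<or> (0 \<le> wp \<and> fst \<sigma>' \<in> vacc V) \<or>
     (0 \<le> wp \<and> fst \<sigma>' \<notin> vacc V \<and> fst \<sigma>' \<notin> vrej V \<and>
       (\<exists>z'. gmv w s z dI = Some z' \<and> (z', \<sigma>', S') \<in> Good V w s \<and> okpos V cb r \<sigma>' S'))"
    using g ls unfolding gok_def by simp
  show ?thesis
  proof (cases "S' = {}")
    case True then show ?thesis using valid_const[of None V] by (auto simp: resp_def)
  next
    case False
    show ?thesis
    proof (cases "0 \<le> wp \<and> fst \<sigma>' \<in> vacc V")
      case True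
      then have "cstat c' = Accepting" using ch2 unfolding stat_of_def by auto
      then show ?thesis using valid_const[of None V]
        by (intro exI[of _ "\<lambda>_ _ _. None"]) (auto simp: resp_def intro: exI[of _ 0])
    next
      case False2: False
      then obtain z' where z': "0 \<le> wp" "fst \<sigma>' \<notin> vacc V" "fst \<sigma>' \<notin> vrej V" "gmv w s z dI = Some z'"
          "(z', \<sigma>', S') \<in> Good V w s" using g2 False by auto
      have "z' = z + mv dI" "\<not> (z + mv dI + s < 0 \<or> z + mv dI + s > int (length w) + 1)"
        using z'(4) unfolding gmv_def by (auto split: if_splits)
      then have "cstat c' = Running" "cinpos c' = z' + s"
        using ch2 z'(1-3) unfolding stat_of_def by (auto simp: algebra_simps)
      then show ?thesis using z'(5) ch2 unfolding Good_def by auto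
    qed
  qed
qed

lemma WW_Good:
  assumes pc: "vpub V \<subseteq> vcomm V"
  shows "WW V cb r w s \<subseteq> Good V w s"
  unfolding WW_def
proof (rule lfp_induct[OF GF_mono])
  show "GF V cb r w s (inf (lfp (GF V cb r w s)) (Good V w s)) \<le> Good V w s"
  proof
    fix e assume e: "e \<in> GF V cb r w s (inf (lfp (GF V cb r w s)) (Good V w s))"
    obtain z \<sigma> S where ez: "e = (z, \<sigma>, S)" by (metis prod_cases3)
    have gm: "\<And>y b S'. gok V cb r w s (inf (lfp (GF V cb r w s)) (Good V w s)) z \<sigma> y b S' \<Longrightarrow> gok V cb r w s (Good V w s) z \<sigma> y b S'"
      by (erule gok_mono[rotated]) auto
    have E: "okpos V cb r \<sigma> S \<and> (if fst \<sigma> \<in> vpub V then lck \<sigma> < r \<and> [] \<notin> S \<and>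
         (\<forall>b. \<exists>y\<in>resp V. gok V cb r w s (Good V w s) z \<sigma> y b {bs. b # bs \<in> S})
      else (\<exists>y\<in>resp V. gok V cb r w s (Good V w s) z \<sigma> y False S))"
    proof -
      have e': "okpos V cb r \<sigma> S \<and> (if fst \<sigma> \<in> vpub V then lck \<sigma> < r \<and> [] \<notin> S \<and>
         (\<forall>b. \<exists>y\<in>resp V. gok V cb r w s (inf (lfp (GF V cb r w s)) (Good V w s)) z \<sigma> y b {bs. b # bs \<in> S})
      else (\<exists>y\<in>resp V. gok V cb r w s (inf (lfp (GF V cb r w s)) (Good V w s)) z \<sigma> y False S))"
        using e unfolding ez GF_mem by simp
      show ?thesis
      proof (cases "fst \<sigma> \<in> vpub V")
        case True
        then have a: "okpos V cb r \<sigma> S" "lck \<sigma> < r" "[] \<notin> S"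
          "\<forall>b. \<exists>y\<in>resp V. gok V cb r w s (inf (lfp (GF V cb r w s)) (Good V w s)) z \<sigma> y b {bs. b # bs \<in> S}"
          using e' by simp_all
        have "\<forall>b. \<exists>y\<in>resp V. gok V cb r w s (Good V w s) z \<sigma> y b {bs. b # bs \<in> S}"
          using a(4) gm by blast
        then show ?thesis using a True by simp
      next
        case False
        then have a: "okpos V cb r \<sigma> S"
          "\<exists>y\<in>resp V. gok V cb r w s (inf (lfp (GF V cb r w s)) (Good V w s)) z \<sigma> y False S"
          using e' by simp_all
        have "\<exists>y\<in>resp V. gok V cb r w s (Good V w s) z \<sigma> y False S"
          using a(2) gm by blast
        then show ?thesis using a False by simp
      qed
    qed
    show "e \<in> Good V w s" unfolding ez Good_def
    proof (clarsimp)
      fix c assume c: "cstat c = Running" "cinpos c = z + s" "\<sigma> = absc c"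
      let ?m = "length (ccomms c)" let ?k = "length (ccoins c)"
      show "\<exists>P. valid_prover V P \<and> (\<forall>bs\<in>S. \<exists>n. cstat ((step V w P (stream_of (ccoins c @ bs)) ^^ n) c) = Accepting)"
      proof (cases "cstate c \<in> vpub V")
        case False
        then obtain y where y: "y \<in> resp V" "gok V cb r w s (Good V w s) z \<sigma> y False S"
          using E c by (auto simp: absc_def)
        define c' where "c' = step V w (\<lambda>_ _ _. y) (stream_of (ccoins c @ [False])) c"
        obtain P' where P': "valid_prover V P'" "\<forall>bs'\<in>S. \<exists>n. cstat ((step V w P' (stream_of (ccoins c' @ bs')) ^^ n) c') = Accepting"
          using branch_back[OF y(2,1) c(1,2)] c(3) unfolding c'_def by auto
        define P'' where "P'' = (if cstate c \<in> vcomm V then (\<lambda>w' cs' xs'. if length xs' = Suc ?m then y else P' w' cs' xs') else P')"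
        have vP: "valid_prover V P''" using P'(1) y(1) unfolding P''_def valid_prover_def resp_def by auto
        have cc: "ccoins c' = ccoins c" unfolding c'_def by (simp add: step_coins False)
        show ?thesis
        proof (intro exI[of _ P''] conjI ballI)
          show "valid_prover V P''" by (rule vP)
          fix bs assume bs: "bs \<in> S"
          let ?cs = "stream_of (ccoins c @ bs)"
          obtain n where n: "cstat ((step V w P' ?cs ^^ n) c') = Accepting" using P'(2) bs cc by auto
          have s1: "step V w P'' ?cs c = c'"
          proof -
            have "step V w P'' ?cs c = step V w P'' (stream_of (ccoins c @ [False])) c"
              by (rule step_stream_cong) (use False in simp)
            also have "\<dots> = c'" unfolding c'_def
              by (rule step_prover_cong) (use False in \<open>simp add: P''_def\<close>)
            finally show ?thesis .
          qed
          have s2: "(step V w P'' ?cs ^^ n) c' = (step V w P' ?cs ^^ n) c'"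
          proof (cases "cstate c \<in> vcomm V")
            case True
            show ?thesis
            proof (rule run_agree[where m = "Suc ?m" and h = "[]"])
              show "\<forall>cs' xs'. Suc ?m < length xs' \<longrightarrow> take (length []) cs' = [] \<longrightarrow> P'' w cs' xs' = P' w cs' xs'"
                using True unfolding P''_def by auto
              show "Suc ?m \<le> length (ccomms c')" unfolding c'_def by (simp add: step_comms_len True c(1))
            qed simp
          next
            case False then show ?thesis unfolding P''_def by simp
          qed
          show "\<exists>n. cstat ((step V w P'' ?cs ^^ n) c) = Accepting"
            using n s1 s2 by (intro exI[of _ "Suc n"]) (simp del: funpow.simps add: fps)
        qed
      next
        case True
        then have E2: "[] \<notin> S" "\<forall>b. \<exists>y\<in>resp V. gok V cb r w s (Good V w s) z \<sigma> y b {bs. b # bs \<in> S}"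
          using E c by (auto simp: absc_def)
        have "\<forall>b. \<exists>yP. fst yP \<in> resp V \<and> valid_prover V (snd yP) \<and> (\<forall>bs'\<in>{bs. b # bs \<in> S}. \<exists>n. cstat ((step V w (snd yP)
             (stream_of (ccoins (step V w (\<lambda>_ _ _. fst yP) (stream_of (ccoins c @ [b])) c) @ bs')) ^^ n)
             (step V w (\<lambda>_ _ _. fst yP) (stream_of (ccoins c @ [b])) c)) = Accepting)"
        proof
          fix b
          obtain y where y: "y \<in> resp V" "gok V cb r w s (Good V w s) z \<sigma> y b {bs. b # bs \<in> S}" using E2 by auto
          obtain P' where P': "valid_prover V P'" "\<forall>bs'\<in>{bs. b # bs \<in> S}. \<exists>n. cstat ((step V w P'
             (stream_of (ccoins (step V w (\<lambda>_ _ _. y) (stream_of (ccoins c @ [b])) c) @ bs')) ^^ n)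
             (step V w (\<lambda>_ _ _. y) (stream_of (ccoins c @ [b])) c)) = Accepting"
            using branch_back[OF y(2,1) c(1,2)] c(3) by blast
          show "\<exists>yP. fst yP \<in> resp V \<and> valid_prover V (snd yP) \<and> (\<forall>bs'\<in>{bs. b # bs \<in> S}. \<exists>n. cstat ((step V w (snd yP)
             (stream_of (ccoins (step V w (\<lambda>_ _ _. fst yP) (stream_of (ccoins c @ [b])) c) @ bs')) ^^ n)
             (step V w (\<lambda>_ _ _. fst yP) (stream_of (ccoins c @ [b])) c)) = Accepting)"
            using P' y(1) by (intro exI[of _ "(y, P')"]) simp
        qed
        then obtain f where f: "\<And>b. fst (f b) \<in> resp V \<and> valid_prover V (snd (f b)) \<and> (\<forall>bs'\<in>{bs. b # bs \<in> S}. \<exists>n. cstat ((step V w (snd (f b))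
             (stream_of (ccoins (step V w (\<lambda>_ _ _. fst (f b)) (stream_of (ccoins c @ [b])) c) @ bs')) ^^ n)
             (step V w (\<lambda>_ _ _. fst (f b)) (stream_of (ccoins c @ [b])) c)) = Accepting)"
          by metis
        define P'' where "P'' = (\<lambda>w' cs' xs'. if length xs' = Suc ?m then fst (f (cs' ! ?k))
            else if Suc ?m < length xs' then snd (f (cs' ! ?k)) w' cs' xs' else None)"
        have vP: "valid_prover V P''" using f unfolding P''_def valid_prover_def resp_def by auto
        show ?thesis
        proof (intro exI[of _ P''] conjI ballI)
          show "valid_prover V P''" by (rule vP)
          fix bs assume bs: "bs \<in> S"
          then obtain b bs' where bb: "bs = b # bs'" using E2(1) by (cases bs) auto
          let ?cs = "stream_of (ccoins c @ bs)"
          define c' where "c' = step V w (\<lambda>_ _ _. fst (f b)) (stream_of (ccoins c @ [b])) c"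
          have cc: "ccoins c' = ccoins c @ [b]" unfolding c'_def using stream_of_at[of "ccoins c" b "[]"] by (simp add: step_coins True c(1))
          obtain n where n: "cstat ((step V w (snd (f b)) ?cs ^^ n) c') = Accepting"
            using f[of b] bs bb cc unfolding c'_def[symmetric] by auto
          have s1: "step V w P'' ?cs c = c'"
          proof -
            have "step V w P'' ?cs c = step V w P'' (stream_of (ccoins c @ [b])) c"
              by (rule step_stream_cong) (simp add: bb stream_of_at stream_of_at[of _ _ "[]", simplified])
            also have "\<dots> = c'" unfolding c'_def
              by (rule step_prover_cong) (use True in \<open>simp add: P''_def stream_of_at[of _ _ "[]", simplified]\<close>)
            finally show ?thesis .
          qed
          have s2: "(step V w P'' ?cs ^^ n) c' = (step V w (snd (f b)) ?cs ^^ n) c'"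
          proof (rule run_agree[where m = "Suc ?m" and h = "ccoins c @ [b]"])
            show "\<forall>cs' xs'. Suc ?m < length xs' \<longrightarrow> take (length (ccoins c @ [b])) cs' = ccoins c @ [b] \<longrightarrow> P'' w cs' xs' = snd (f b) w cs' xs'"
            proof (intro allI impI)
              fix cs' :: "bool list" and xs' :: "nat option list"
              assume a: "Suc ?m < length xs'" "take (length (ccoins c @ [b])) cs' = ccoins c @ [b]"
              then have "cs' ! ?k = b"
                by (metis length_append_singleton lessI nth_append_length nth_take)
              then show "P'' w cs' xs' = snd (f b) w cs' xs'" using a(1) unfolding P''_def by auto
            qed
            show "Suc ?m \<le> length (ccomms c')" unfolding c'_def using True c(1) pc by (auto simp add: step_comms_len)
            show "take (length (ccoins c @ [b])) (ccoins c') = ccoins c @ [b]" using cc by simp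
          qed
          show "\<exists>n. cstat ((step V w P'' ?cs ^^ n) c) = Accepting"
            using n s1 s2 by (intro exI[of _ "Suc n"]) (simp del: funpow.simps add: fps)
        qed
      qed
    qed
  qed
qed


inductive reach :: "'a verifier \<Rightarrow> 'a list \<Rightarrow> 'a prover \<Rightarrow> config \<Rightarrow> bool" for V w P where
  "reach V w P (init_config V)"
| "reach V w P c \<Longrightarrow> reach V w P (step V w P cs c)"

lemma wf_delta:
  assumes "wf_verifier V" "q \<in> vstates V" "g \<in> insert None (Some ` vwork V)" "x \<in> insert None (Some ` vcalph V)"
  shows "case vdelta V q a g x b of (q', g', x', _, _) \<Rightarrow>
           q' \<in> vstates V \<and> g' \<in> insert None (Some ` vwork V) \<and> x' \<in> insert None (Some ` vcalph V)"
proof -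
  have "\<forall>q\<in>vstates V. \<forall>a g x b.
        g \<in> insert None (Some ` vwork V) \<longrightarrow> x \<in> insert None (Some ` vcalph V) \<longrightarrow>
        (case vdelta V q a g x b of (q', g', x', _, _) \<Rightarrow>
           q' \<in> vstates V \<and> g' \<in> insert None (Some ` vwork V) \<and>
           x' \<in> insert None (Some ` vcalph V))"
    using assms(1) unfolding wf_verifier_def by (elim conjE)
  then show ?thesis using assms(2-4) by (elim ballE allE impE) auto
qed

lemma run_Suc: "run V w P cs (Suc n) = step V w P cs (run V w P cs n)"
  unfolding run_def by simp

lemma run_stream_agree:
  "(\<forall>i < length (ccoins (run V w P cs n)). cs i = cs' i) \<Longrightarrow> run V w P cs' n = run V w P cs n"
proof (induction n)
  case 0 then show ?case by (simp add: run_def)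
next
  case (Suc n)
  let ?c = "run V w P cs n"
  have le: "length (ccoins ?c) \<le> length (ccoins (run V w P cs (Suc n)))"
    unfolding run_Suc using step_coins[of V w P cs ?c] by auto
  have ih: "run V w P cs' n = ?c" using Suc le by auto
  have "step V w P cs' ?c = step V w P cs ?c"
  proof (rule step_stream_cong)
    assume "cstat ?c = Running" "cstate ?c \<in> vpub V"
    then have "length (ccoins (run V w P cs (Suc n))) = Suc (length (ccoins ?c))"
      unfolding run_Suc using step_coins[of V w P cs ?c] by auto
    then show "cs' (length (ccoins ?c)) = cs (length (ccoins ?c))" using Suc.prems by auto
  qed
  then show ?case using ih by (simp add: run_Suc)
qed

lemma reach_run: "reach V w P c \<Longrightarrow> \<exists>cs n. c = run V w P cs n"
proof (induction rule: reach.induct)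
  case 1
  have "init_config V = run V w P (\<lambda>_. False) 0" by (simp add: run_def)
  then show ?case by blast
next
  case (2 c cs')
  then obtain cs n where c: "c = run V w P cs n" by auto
  define cs'' where "cs'' = (\<lambda>i. if i < length (ccoins c) then cs i else cs' i)"
  have "run V w P cs'' n = c" using run_stream_agree[of V w P cs n cs''] c unfolding cs''_def by auto
  moreover have "step V w P cs'' c = step V w P cs' c"
    by (rule step_stream_cong) (simp add: cs''_def)
  ultimately show ?case by (metis run_Suc)
qed

context
  fixes V :: "'a verifier" and w :: "'a list" and P :: "'a prover" and cb r :: nat and s :: int
  assumes wf: "wf_verifier V" and vP: "valid_prover V P"
    and cbd: "\<forall>w P cs n. valid_prover V P \<longrightarrow> cwpos (run V w P cs n) < cb"
    and cob: "coin_bounded V r"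
begin

lemma reach_cw: "reach V w P c \<Longrightarrow> cwpos c < cb"
  using reach_run cbd vP by blast

lemma reach_k: "reach V w P c \<Longrightarrow> length (ccoins c) \<le> r"
  using reach_run cob vP unfolding coin_bounded_def by blast

lemma reach_inv: "reach V w P c \<Longrightarrow> cstate c \<in> vstates V \<and> (\<forall>j. ctape c j \<in> insert None (Some ` vwork V)) \<and>
   (\<forall>j. cb \<le> j \<longrightarrow> ctape c j = None) \<and> ccell c \<in> resp V \<and>
   (cstat c = Running \<longrightarrow> 0 \<le> cinpos c \<and> cinpos c \<le> int (length w) + 1)"
proof (induction rule: reach.induct)
  case 1 then show ?case using wf unfolding init_config_def wf_verifier_def resp_def by auto
next
  case (2 c cs)
  show ?case
  proof (cases "cstat c = Running")
    case False then show ?thesis using 2 by (simp add: step_halted)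
  next
    case True
    have cw: "cwpos c < cb" using reach_cw 2(1) .
    let ?b = "cstate c \<in> vpub V \<and> cs (length (ccoins c))"
    obtain q' g' x' dI dW where d: "vdelta V (cstate c) (insym w (cinpos c)) (ctape c (cwpos c)) (ccell c) ?b = (q', g', x', dI, dW)"
      by (metis prod_cases5)
    have dd: "case vdelta V (cstate c) (insym w (cinpos c)) (ctape c (cwpos c)) (ccell c) ?b of (q', g', x', _, _) \<Rightarrow>
           q' \<in> vstates V \<and> g' \<in> insert None (Some ` vwork V) \<and> x' \<in> insert None (Some ` vcalph V)"
    proof -
      have i: "cstate c \<in> vstates V" "ctape c (cwpos c) \<in> insert None (Some ` vwork V)" "ccell c \<in> insert None (Some ` vcalph V)"
        using 2(2) by (auto simp: resp_def)
      show ?thesis by (rule wf_delta[OF wf i])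
    qed
    then have q: "q' \<in> vstates V" "g' \<in> insert None (Some ` vwork V)" using d by auto
    have pv: "\<And>a b. P w a b \<in> resp V" using vP unfolding valid_prover_def resp_def by auto
    have f1: "cstate (step V w P cs c) = q'" using True d by (simp add: step_def Let_def)
    have f2: "ctape (step V w P cs c) = (ctape c)(cwpos c := g')" using True d by (simp add: step_def Let_def)
    have f3: "ccell (step V w P cs c) \<in> resp V" using True d 2(2) pv by (simp add: step_def Let_def)
    have f4: "cstat (step V w P cs c) = Running \<Longrightarrow> 0 \<le> cinpos (step V w P cs c) \<and> cinpos (step V w P cs c) \<le> int (length w) + 1"
      using True d by (simp add: step_def Let_def split: if_splits)
    show ?thesis using f1 f2 f3 f4 q 2(2) cw by auto
  qed
qed

lemma reach_good: "reach V w P c \<Longrightarrow> goodlc V cb r (absc c)"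
  using reach_inv[of c] reach_cw[of c] reach_k[of c] unfolding goodlc_def absc_def by auto

lemma fwd_branch:
  assumes rc: "reach V w P c" "cstat c = Running"
    and len: "\<forall>bs'\<in>S'. length bs' + length (ccoins (step V w P (stream_of (ccoins c @ [b])) c)) = r"
    and acc: "\<forall>bs'\<in>S'. \<exists>n. Suc n \<le> N \<and> cstat ((step V w P (stream_of (ccoins (step V w P (stream_of (ccoins c @ [b])) c) @ bs')) ^^ n) (step V w P (stream_of (ccoins c @ [b])) c)) = Accepting"
    and IH: "\<And>c'' S''. S'' \<noteq> {} \<Longrightarrow> reach V w P c'' \<Longrightarrow> cstat c'' = Running \<Longrightarrow>
       (\<forall>bs\<in>S''. length bs + length (ccoins c'') = r) \<Longrightarrow>
       (\<forall>bs\<in>S''. \<exists>n. Suc n \<le> N \<and> cstat ((step V w P (stream_of (ccoins c'' @ bs)) ^^ n) c'') = Accepting) \<Longrightarrow>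
       (cinpos c'' - s, absc c'', S'') \<in> WW V cb r w s"
  shows "gok V cb r w s (WW V cb r w s) (cinpos c - s) (absc c) (ccell (step V w P (stream_of (ccoins c @ [b])) c)) b S'"
proof -
  define c' where "c' = step V w P (stream_of (ccoins c @ [b])) c"
  have sb: "stream_of (ccoins c @ [b]) (length (ccoins c)) = b" using stream_of_at[of "ccoins c" b "[]"] by simp
  obtain dI wp \<sigma>' where ls: "lstep V (insym w (cinpos c)) (absc c) (ccell c') b = (dI, wp, \<sigma>')" by (metis prod_cases3)
  have ch: "absc c' = \<sigma>' \<and> cinpos c' = cinpos c + mv dI \<and> cstat c' = stat_of V w (cinpos c + mv dI) wp (fst \<sigma>')"
    using step_char[OF rc(2), of V w P "stream_of (ccoins c @ [b])"] sb ls unfolding c'_def by simp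
  have rc': "reach V w P c'" unfolding c'_def using rc(1) by (rule reach.intros)
  have "S' = {} \<or> (0 \<le> wp \<and> fst \<sigma>' \<in> vacc V) \<or>
     (0 \<le> wp \<and> fst \<sigma>' \<notin> vacc V \<and> fst \<sigma>' \<notin> vrej V \<and>
       (\<exists>z'. gmv w s (cinpos c - s) dI = Some z' \<and> (z', \<sigma>', S') \<in> WW V cb r w s \<and> okpos V cb r \<sigma>' S'))"
  proof (cases "S' = {}")
    case False
    then obtain bs0 where bs0: "bs0 \<in> S'" by auto
    show ?thesis
    proof (cases "cstat c'")
      case Accepting then show ?thesis using ch unfolding stat_of_def by (auto split: if_splits)
    next
      case Rejecting
      obtain n where n: "cstat ((step V w P (stream_of (ccoins c' @ bs0)) ^^ n) c') = Accepting"
        using acc bs0 unfolding c'_def[symmetric] by blast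
      have "(step V w P (stream_of (ccoins c' @ bs0)) ^^ n) c' = c'" by (rule funpow_halted) (simp add: Rejecting)
      then show ?thesis using n Rejecting by simp
    next
      case Running
      then have st: "0 \<le> wp" "fst \<sigma>' \<notin> vacc V" "fst \<sigma>' \<notin> vrej V" "\<not> (cinpos c + mv dI < 0 \<or> cinpos c + mv dI > int (length w) + 1)"
        using ch unfolding stat_of_def by (auto split: if_splits)
      have g: "gmv w s (cinpos c - s) dI = Some (cinpos c' - s)" using st(4) ch unfolding gmv_def by auto
      have m: "(cinpos c' - s, absc c', S') \<in> WW V cb r w s"
        using IH[OF False rc' Running] len acc unfolding c'_def by auto
      have "okpos V cb r \<sigma>' S'" using reach_good[OF rc'] ch len unfolding okpos_def c'_def by auto
      then show ?thesis using st g m ch by auto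
    qed
  qed simp
  then show ?thesis unfolding gok_def c'_def[symmetric] using ls by simp
qed

lemma fwd_core:
  assumes rc: "reach V w P c" "cstat c = Running"
    and len: "\<forall>bs\<in>S. length bs + length (ccoins c) = r"
    and acc: "\<forall>bs\<in>S. \<exists>n\<le>N. cstat ((step V w P (stream_of (ccoins c @ bs)) ^^ n) c) = Accepting"
    and IH: "\<And>c'' S''. S'' \<noteq> {} \<Longrightarrow> reach V w P c'' \<Longrightarrow> cstat c'' = Running \<Longrightarrow>
       (\<forall>bs\<in>S''. length bs + length (ccoins c'') = r) \<Longrightarrow>
       (\<forall>bs\<in>S''. \<exists>n. Suc n \<le> N \<and> cstat ((step V w P (stream_of (ccoins c'' @ bs)) ^^ n) c'') = Accepting) \<Longrightarrow>
       (cinpos c'' - s, absc c'', S'') \<in> WW V cb r w s"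
  shows "(cinpos c - s, absc c, S) \<in> WW V cb r w s"
proof -
  let ?W = "WW V cb r w s"
  let ?k = "length (ccoins c)"
  define c' where "c' = (\<lambda>b. step V w P (stream_of (ccoins c @ [b])) c)"
  have rc': "\<And>b. reach V w P (c' b)" unfolding c'_def using rc(1) by (rule reach.intros)
  have yr: "\<And>b. ccell (c' b) \<in> resp V" using reach_inv[OF rc'] by auto
  have inv: "0 \<le> cinpos c \<and> cinpos c \<le> int (length w) + 1" using reach_inv[OF rc(1)] rc(2) by auto
  have ok: "okpos V cb r (absc c) S" using reach_good[OF rc(1)] len unfolding okpos_def by auto
  have nz: "\<And>bs n. bs \<in> S \<Longrightarrow> n \<le> N \<Longrightarrow> cstat ((step V w P (stream_of (ccoins c @ bs)) ^^ n) c) = Accepting \<Longrightarrow> n \<noteq> 0"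
    using rc(2) by (metis funpow_0 status.distinct(1))
  have "(cinpos c - s, absc c, S) \<in> GF V cb r w s ?W"
  proof (cases "cstate c \<in> vpub V")
    case False
    have cc: "ccoins (c' False) = ccoins c" unfolding c'_def by (simp add: step_coins False)
    have g: "gok V cb r w s ?W (cinpos c - s) (absc c) (ccell (c' False)) False S"
      unfolding c'_def
    proof (rule fwd_branch[OF rc])
      show "\<forall>bs'\<in>S. length bs' + length (ccoins (step V w P (stream_of (ccoins c @ [False])) c)) = r"
        using len cc unfolding c'_def by simp
      show "\<forall>bs'\<in>S. \<exists>n. Suc n \<le> N \<and> cstat ((step V w P (stream_of (ccoins (step V w P (stream_of (ccoins c @ [False])) c) @ bs')) ^^ n) (step V w P (stream_of (ccoins c @ [False])) c)) = Accepting"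
      proof
        fix bs assume bs: "bs \<in> S"
        then obtain n where n: "n \<le> N" "cstat ((step V w P (stream_of (ccoins c @ bs)) ^^ n) c) = Accepting" using acc by auto
        then obtain n' where n': "n = Suc n'" using nz[OF bs n(1) n(2)] by (cases n) auto
        have "step V w P (stream_of (ccoins c @ bs)) c = c' False"
          unfolding c'_def by (rule step_stream_cong) (use False in simp)
        then show "\<exists>n. Suc n \<le> N \<and> cstat ((step V w P (stream_of (ccoins (step V w P (stream_of (ccoins c @ [False])) c) @ bs)) ^^ n) (step V w P (stream_of (ccoins c @ [False])) c)) = Accepting"
          using n n' cc unfolding c'_def by (intro exI[of _ n']) (simp del: funpow.simps add: fps)
      qed
    qed (rule IH; assumption)
    then show ?thesis using False inv ok yr unfolding GF_def by (auto simp: absc_def)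
  next
    case True
    have cc: "\<And>b. ccoins (c' b) = ccoins c @ [b]" unfolding c'_def using
      stream_of_at[of "ccoins c" _ "[]"] by (simp add: step_coins True rc(2))
    have kr: "?k < r" using reach_k[OF rc'[of False]] cc[of False] by simp
    have ne: "[] \<notin> S" using len kr by fastforce
    have g: "gok V cb r w s ?W (cinpos c - s) (absc c) (ccell (c' b)) b {bs. b # bs \<in> S}" for b
      unfolding c'_def
    proof (rule fwd_branch[OF rc])
      show "\<forall>bs'\<in>{bs. b # bs \<in> S}. length bs' + length (ccoins (step V w P (stream_of (ccoins c @ [b])) c)) = r"
        using len cc unfolding c'_def by auto
      show "\<forall>bs'\<in>{bs. b # bs \<in> S}. \<exists>n. Suc n \<le> N \<and> cstat ((step V w P (stream_of (ccoins (step V w P (stream_of (ccoins c @ [b])) c) @ bs')) ^^ n) (step V w P (stream_of (ccoins c @ [b])) c)) = Accepting"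
      proof
        fix bs assume bs0: "bs \<in> {bs. b # bs \<in> S}"
        then have bs: "b # bs \<in> S" by simp
        then obtain n where n: "n \<le> N" "cstat ((step V w P (stream_of (ccoins c @ b # bs)) ^^ n) c) = Accepting" using acc by auto
        then obtain n' where n': "n = Suc n'" using nz[OF bs n(1) n(2)] by (cases n) auto
        have "step V w P (stream_of (ccoins c @ b # bs)) c = c' b"
          unfolding c'_def by (rule step_stream_cong) (simp add: stream_of_at stream_of_at[of _ _ "[]", simplified])
        then show "\<exists>n. Suc n \<le> N \<and> cstat ((step V w P (stream_of (ccoins (step V w P (stream_of (ccoins c @ [b])) c) @ bs)) ^^ n) (step V w P (stream_of (ccoins c @ [b])) c)) = Accepting"
          using n n' cc[of b] unfolding c'_def by (intro exI[of _ n']) (simp del: funpow.simps add: fps)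
      qed
    qed (rule IH; assumption)
    then show ?thesis using True inv ok yr kr ne unfolding GF_def by (auto simp: absc_def lck_def)
  qed
  then show ?thesis unfolding WW_def using lfp_unfold[OF GF_mono] by blast
qed

lemma fwd_main:
  "reach V w P c \<Longrightarrow> cstat c = Running \<Longrightarrow> (\<forall>bs\<in>S. length bs + length (ccoins c) = r) \<Longrightarrow>
   (\<forall>bs\<in>S. \<exists>n\<le>N. cstat ((step V w P (stream_of (ccoins c @ bs)) ^^ n) c) = Accepting) \<Longrightarrow>
   (cinpos c - s, absc c, S) \<in> WW V cb r w s"
proof (induction N arbitrary: c S)
  case 0
  show ?case by (rule fwd_core[OF 0(1-4)]) auto
next
  case (Suc N)
  show ?case
  proof (rule fwd_core[OF Suc(2-5)])
    fix c'' S'' assume a: "S'' \<noteq> {}" "reach V w P c''" "cstat c'' = Running"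
       "\<forall>bs\<in>S''. length bs + length (ccoins c'') = r"
       "\<forall>bs\<in>S''. \<exists>n. Suc n \<le> Suc N \<and> cstat ((step V w P (stream_of (ccoins c'' @ bs)) ^^ n) c'') = Accepting"
    show "(cinpos c'' - s, absc c'', S'') \<in> WW V cb r w s"
      by (rule Suc.IH[OF a(2-4)]) (use a(5) in auto)
  qed
qed

end


lemma run_eq: "run V w P cs n = (step V w P cs ^^ n) (init_config V)"
  unfolding run_def ..

lemma absc_init: "absc (init_config V) = sig0 V"
  unfolding absc_def init_config_def sig0_def by simp

lemma cinpos_init: "cinpos (init_config V) = 0"
  unfolding init_config_def by simp

lemma ccoins_init: "ccoins (init_config V) = []"
  unfolding init_config_def by simp

lemma finite_len: "finite {bs :: bool list. length bs = r}"
  using finite_lists_length_eq[of "UNIV :: bool set" r] by simp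

lemma card_len: "card {bs :: bool list. length bs = r} = 2 ^ r"
  using card_lists_length_eq[of "UNIV :: bool set" r] by simp

lemma B1:
  assumes wf: "wf_verifier V"
    and cbd: "\<forall>w P cs n. valid_prover V P \<longrightarrow> cwpos (run V w P cs n) < cb"
    and cob: "coin_bounded V r"
    and S: "S \<noteq> {}" "S \<subseteq> {bs. length bs = r}"
  shows "(\<exists>P. valid_prover V P \<and> (\<forall>bs\<in>S. \<exists>n. cstat (run V w P (stream_of bs) n) = Accepting)) \<longleftrightarrow>
    (vinit V \<in> vacc V \<or> (vinit V \<notin> vacc V \<and> vinit V \<notin> vrej V \<and> (- s, sig0 V, S) \<in> WW V cb r w s))"
proof (cases "vinit V \<in> vacc V")
  case True
  then have "cstat (run V w (\<lambda>_ _ _. None) (stream_of bs) 0) = Accepting" for bs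
    by (simp add: run_def init_config_def)
  moreover have "valid_prover V (\<lambda>_ _ _. None)" unfolding valid_prover_def by simp
  ultimately show ?thesis using True by blast
next
  case na: False
  show ?thesis
  proof (cases "vinit V \<in> vrej V")
    case True
    then have "cstat (run V w P cs n) = Rejecting" for P cs n
      using na funpow_halted[where c="init_config V" and V=V and w=w and P=P and cs=cs and n=n] by (simp add: run_def init_config_def)
    then show ?thesis using na True S(1) by auto
  next
    case nr: False
    have run0: "cstat (init_config V) = Running" using na nr by (simp add: init_config_def)
    show ?thesis
    proof
      assume "\<exists>P. valid_prover V P \<and> (\<forall>bs\<in>S. \<exists>n. cstat (run V w P (stream_of bs) n) = Accepting)"
      then obtain P where P: "valid_prover V P" "\<forall>bs\<in>S. \<exists>n. cstat (run V w P (stream_of bs) n) = Accepting" by blast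
      obtain f where f: "\<forall>bs\<in>S. cstat (run V w P (stream_of bs) (f bs)) = Accepting" using P(2) by metis
      have fS: "finite S" using S(2) finite_len finite_subset by blast
      have "\<forall>bs\<in>S. \<exists>n\<le>Max (f ` S). cstat ((step V w P (stream_of (ccoins (init_config V) @ bs)) ^^ n) (init_config V)) = Accepting"
        using f fS by (auto simp: run_def init_config_def intro!: exI[of _ "f _"])
      moreover have "\<forall>bs\<in>S. length bs + length (ccoins (init_config V)) = r" using S(2) by (auto simp: init_config_def)
      ultimately have "(cinpos (init_config V) - s, absc (init_config V), S) \<in> WW V cb r w s"
        using fwd_main[OF wf P(1) cbd cob reach.intros(1) run0] by blast
      then show "vinit V \<in> vacc V \<or> (vinit V \<notin> vacc V \<and> vinit V \<notin> vrej V \<and> (- s, sig0 V, S) \<in> WW V cb r w s)"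
        using na nr by (simp add: absc_init cinpos_init)
    next
      assume "vinit V \<in> vacc V \<or> (vinit V \<notin> vacc V \<and> vinit V \<notin> vrej V \<and> (- s, sig0 V, S) \<in> WW V cb r w s)"
      then have "(- s, sig0 V, S) \<in> Good V w s" using na WW_Good[of V cb r w s] wf unfolding wf_verifier_def by blast
      then have "\<exists>P. valid_prover V P \<and> (\<forall>bs\<in>S. \<exists>n. cstat ((step V w P (stream_of (ccoins (init_config V) @ bs)) ^^ n) (init_config V)) = Accepting)"
        unfolding Good_def using run0 by (simp add: absc_init cinpos_init)
      then show "\<exists>P. valid_prover V P \<and> (\<forall>bs\<in>S. \<exists>n. cstat (run V w P (stream_of bs) n) = Accepting)"
        by (simp add: run_def ccoins_init)
    qed
  qed
qed

lemma halted_stays: "cstat (run V w P cs n) \<noteq> Running \<Longrightarrow> m \<ge> n \<Longrightarrow> run V w P cs m = run V w P cs n"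
proof -
  assume a: "cstat (run V w P cs n) \<noteq> Running" "m \<ge> n"
  then obtain k where "m = k + n" using le_Suc_ex by (metis add.commute)
  then show ?thesis using funpow_halted[OF a(1), where V=V and w=w and P=P and cs=cs and n=k]
    by (simp add: run_def funpow_add)
qed

lemma acc_rej_disj: "cstat (run V w P cs n1) = Accepting \<Longrightarrow> cstat (run V w P cs n2) = Rejecting \<Longrightarrow> False"
  by (metis halted_stays nat_le_linear status.distinct(1,3,5))

lemma L_char:
  assumes ver: "verifies V r L \<epsilon>"
  shows "w \<in> L \<longleftrightarrow> (\<exists>S. S \<subseteq> {bs. length bs = r} \<and> 2 ^ r < 2 * card S \<and>
           (\<exists>P. valid_prover V P \<and> (\<forall>bs\<in>S. \<exists>n. cstat (run V w P (stream_of bs) n) = Accepting)))"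
proof -
  obtain ep em where e: "ep < 1/2" "em < 1/2"
    "\<exists>P. valid_prover V P \<and> (\<forall>w\<in>L. acc_prob V r w P \<ge> 1 - ep)"
    "\<forall>P. valid_prover V P \<longrightarrow> (\<forall>w. w \<notin> L \<longrightarrow> rej_prob V r w P \<ge> 1 - em)"
    using ver unfolding verifies_def by blast
  have pos: "(0::real) < 2 ^ r" by simp
  show ?thesis
  proof
    assume w: "w \<in> L"
    obtain P where P: "valid_prover V P" "acc_prob V r w P \<ge> 1 - ep" using e(3) w by blast
    define A where "A = {bs. length bs = r \<and> (\<exists>n. cstat (run V w P (stream_of bs) n) = Accepting)}"
    have "real (card A) / 2 ^ r > 1/2" using P(2) e(1) unfolding acc_prob_def A_def by linarith
    then have "real (card A) > 2 ^ r / 2" using pos by (simp add: field_simps)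
    then have "real (2 ^ r) < real (2 * card A)" by simp
    then have "2 ^ r < 2 * card A" by (simp only: of_nat_less_iff)
    then show "\<exists>S. S \<subseteq> {bs. length bs = r} \<and> 2 ^ r < 2 * card S \<and>
           (\<exists>P. valid_prover V P \<and> (\<forall>bs\<in>S. \<exists>n. cstat (run V w P (stream_of bs) n) = Accepting))"
      using P(1) by (intro exI[of _ A]) (auto simp: A_def)
  next
    assume "\<exists>S. S \<subseteq> {bs. length bs = r} \<and> 2 ^ r < 2 * card S \<and>
           (\<exists>P. valid_prover V P \<and> (\<forall>bs\<in>S. \<exists>n. cstat (run V w P (stream_of bs) n) = Accepting))"
    then obtain S P where S: "S \<subseteq> {bs. length bs = r}" "2 ^ r < 2 * card S" "valid_prover V P"
      "\<forall>bs\<in>S. \<exists>n. cstat (run V w P (stream_of bs) n) = Accepting" by blast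
    show "w \<in> L"
    proof (rule ccontr)
      assume "w \<notin> L"
      then have rp: "rej_prob V r w P \<ge> 1 - em" using e(4) S(3) by blast
      define R where "R = {bs. length bs = r \<and> (\<exists>n. cstat (run V w P (stream_of bs) n) = Rejecting)}"
      have "real (card R) / 2 ^ r > 1/2" using rp e(2) unfolding rej_prob_def R_def by linarith
      then have "real (card R) > 2 ^ r / 2" using pos by (simp add: field_simps)
      then have "real (2 ^ r) < real (2 * card R)" by simp
      then have r2: "2 ^ r < 2 * card R" by (simp only: of_nat_less_iff)
      have dj: "R \<inter> S = {}" using S(4) acc_rej_disj unfolding R_def by blast
      have sub: "R \<union> S \<subseteq> {bs. length bs = r}" using S(1) unfolding R_def by auto
      have "card (R \<union> S) \<le> 2 ^ r"
        using card_mono[OF finite_len sub] card_len[of r] by simp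
      moreover have "card (R \<union> S) = card R + card S"
        using card_Un_disjoint[OF _ _ dj] finite_subset[OF _ finite_len] S(1) unfolding R_def
        by (metis (no_types, lifting) mem_Collect_eq subsetI)
      ultimately show False using S(2) r2 by linarith
    qed
  qed
qed

lemma regular_of_finite_index:
  fixes L :: "'a list set" and T :: "'a list \<Rightarrow> 'b"
  assumes fin: "finite (range T)"
    and cong: "\<And>u u' v. T u = T u' \<Longrightarrow> (u @ v \<in> L \<longleftrightarrow> u' @ v \<in> L)"
  shows "regular L"
proof -
  define R where "R = (\<lambda>u. {v. u @ v \<in> L})"
  have RT: "T u = T u' \<Longrightarrow> R u = R u'" for u u' using cong unfolding R_def by blast
  have "range R \<subseteq> (\<lambda>t. R (SOME u. T u = t)) ` range T"
  proof
    fix X assume "X \<in> range R"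
    then obtain u where u: "X = R u" by auto
    have "T (SOME u'. T u' = T u) = T u" by (rule someI) auto
    then have "X = R (SOME u'. T u' = T u)" using RT u by metis
    then show "X \<in> (\<lambda>t. R (SOME u. T u = t)) ` range T" by blast
  qed
  then have finR: "finite (range R)" using fin finite_subset by blast
  obtain f :: "'a list set \<Rightarrow> nat" and n where f: "f ` range R = {i. i < n}" "inj_on f (range R)"
    using finite_imp_inj_to_nat_seg[OF finR] by blast
  define d where "d = (\<lambda>q a. f {v. a # v \<in> the_inv_into (range R) f q})"
  have Rapp: "{v. a # v \<in> R u} = R (u @ [a])" for u a unfolding R_def by auto
  have dR: "d (f (R u)) a = f (R (u @ [a]))" for u a
    unfolding d_def using the_inv_into_f_f[OF f(2), of "R u"] Rapp by simp
  have fold: "foldl d (f (R u)) w = f (R (u @ w))" for u w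
    by (induction w arbitrary: u) (simp_all add: dR)
  show ?thesis unfolding regular_def
  proof (intro exI conjI)
    show "finite (f ` range R)" using finR by simp
    show "f (R []) \<in> f ` range R" by simp
    show "\<forall>q\<in>f ` range R. \<forall>a. d q a \<in> f ` range R" using dR by auto
    show "L = {w. foldl d (f (R [])) w \<in> f ` {X \<in> range R. [] \<in> X}}"
    proof (intro set_eqI iffI)
      fix w assume "w \<in> L"
      then show "w \<in> {w. foldl d (f (R [])) w \<in> f ` {X \<in> range R. [] \<in> X}}"
        using fold[of "[]" w] unfolding R_def by auto
    next
      fix w assume "w \<in> {w. foldl d (f (R [])) w \<in> f ` {X \<in> range R. [] \<in> X}}"
      then obtain X where X: "X \<in> range R" "[] \<in> X" "f (R w) = f X" using fold[of "[]" w] by auto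
      then have "X = R w" using f(2) by (metis inj_on_def rangeI)
      then show "w \<in> L" using X(2) unfolding R_def by simp
    qed
  qed
qed

lemma ver_regular:
  assumes wf: "wf_verifier V" and cs: "const_space V" and cob: "coin_bounded V r"
    and ver: "verifies V r L \<epsilon>"
  shows "regular L"
proof -
  obtain cb where cbd: "\<forall>w P cs n. valid_prover V P \<longrightarrow> cwpos (run V w P cs n) < cb"
    using cs unfolding const_space_def by blast
  have fin: "finite (range (gtyp V cb r))"
  proof -
    have "finite (vstates V)" "finite (vwork V)" "finite (vcalph V)" using wf by (simp_all add: wf_verifier_def)
    then show ?thesis by (rule finite_gtyp_range)
  qed
  define G where "G = (\<lambda>w s S. vinit V \<in> vacc V \<or> (vinit V \<notin> vacc V \<and> vinit V \<notin> vrej V \<and> (- s, sig0 V, S) \<in> WW V cb r w s))"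
  have Lc: "u @ v \<in> L \<longleftrightarrow> (\<exists>S. S \<subseteq> {bs. length bs = r} \<and> 2 ^ r < 2 * card S \<and> G (u @ v) (int (length u)) S)" for u v
  proof -
    have eq: "(S \<subseteq> {bs. length bs = r} \<and> 2 ^ r < 2 * card S \<and>
      (\<exists>P. valid_prover V P \<and> (\<forall>bs\<in>S. \<exists>n. cstat (run V (u @ v) P (stream_of bs) n) = Accepting))) \<longleftrightarrow>
      (S \<subseteq> {bs. length bs = r} \<and> 2 ^ r < 2 * card S \<and> G (u @ v) (int (length u)) S)" for S
    proof (cases "S \<subseteq> {bs. length bs = r} \<and> 2 ^ r < 2 * card S")
      case True
      then have ne: "S \<noteq> {}" by (intro notI) simp
      have "(\<exists>P. valid_prover V P \<and> (\<forall>bs\<in>S. \<exists>n. cstat (run V (u @ v) P (stream_of bs) n) = Accepting)) \<longleftrightarrow> G (u @ v) (int (length u)) S"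
        unfolding G_def by (rule B1[OF wf cbd cob ne]) (use True in simp)
      then show ?thesis by simp
    next
      case False then show ?thesis by blast
    qed
    show ?thesis unfolding L_char[OF ver, of "u @ v"] eq ..
  qed
  show ?thesis
  proof (rule regular_of_finite_index[OF fin])
    fix u u' v assume t: "gtyp V cb r u = gtyp V cb r u'"
    have "G (u @ v) (int (length u)) S = G (u' @ v) (int (length u')) S" for S
      unfolding G_def using WW_typ[OF t, of S v] by simp
    then show "u @ v \<in> L \<longleftrightarrow> u' @ v \<in> L" unfolding Lc by simp
  qed
qed


definition dd :: "nat set \<Rightarrow> (nat \<Rightarrow> 'a \<Rightarrow> nat) \<Rightarrow> nat \<Rightarrow> 'a tsym \<Rightarrow> nat option \<Rightarrow> nat option \<Rightarrow> bool
   \<Rightarrow> nat \<times> nat option \<times> nat option \<times> move \<times> move" where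
  "dd F d q a g x b = (if 2 \<le> q then (case a of LEnd \<Rightarrow> (q, None, None, MRight, MStay)
      | Sym c \<Rightarrow> (d (q - 2) c + 2, None, None, MRight, MStay)
      | REnd \<Rightarrow> (if q - 2 \<in> F then 0 else 1, None, None, MStay, MStay))
    else (q, None, None, MStay, MStay))"

definition dfaV :: "nat set \<Rightarrow> nat \<Rightarrow> nat set \<Rightarrow> (nat \<Rightarrow> 'a \<Rightarrow> nat) \<Rightarrow> 'a verifier" where
  "dfaV Q q0 F d = \<lparr>vstates = {0,1} \<union> (\<lambda>q. q + 2) ` Q, vinit = q0 + 2, vpub = {}, vcomm = {},
     vacc = {0}, vrej = {1}, vwork = {}, vcalph = {}, vdelta = dd F d\<rparr>"

lemma dfaV_wf:
  assumes "finite Q" "q0 \<in> Q" "\<forall>q\<in>Q. \<forall>a. d q a \<in> Q"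
  shows "wf_verifier (dfaV Q q0 F d)"
  unfolding wf_verifier_def dfaV_def using assms
  by (auto simp: dd_def split: tsym.splits)

lemma dd_dW: "snd (snd (snd (snd (dd F d q a g x b)))) = MStay"
  unfolding dd_def by (auto split: tsym.splits)

lemma dfaV_cw: "cwpos (run (dfaV Q q0 F d) w P cs n) = 0"
proof (induction n)
  case 0 then show ?case by (simp add: run_def init_config_def)
next
  case (Suc n)
  let ?c = "run (dfaV Q q0 F d) w P cs n"
  have "cwpos (step (dfaV Q q0 F d) w P cs ?c) = 0"
  proof (cases "cstat ?c = Running")
    case False then show ?thesis using Suc by (simp add: step_halted)
  next
    case True
    obtain q' g' x' dI dW where dq: "vdelta (dfaV Q q0 F d) (cstate ?c) (insym w (cinpos ?c)) (ctape ?c (cwpos ?c)) (ccell ?c)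
      (cstate ?c \<in> vpub (dfaV Q q0 F d) \<and> cs (length (ccoins ?c))) = (q', g', x', dI, dW)" by (metis prod_cases5)
    have "dW = MStay" using dq dd_dW[of F d] unfolding dfaV_def by (metis snd_conv verifier.select_convs(9))
    then show ?thesis using True dq Suc by (simp add: step_def Let_def)
  qed
  then show ?case by (simp add: run_def)
qed

lemma dfaV_coins: "ccoins (run (dfaV Q q0 F d) w P cs n) = []"
proof (induction n)
  case 0 then show ?case by (simp add: run_def init_config_def)
next
  case (Suc n)
  then show ?case unfolding run_def using step_coins[of "dfaV Q q0 F d" w P cs] by (simp add: dfaV_def)
qed

lemma dfaV_exec:
  assumes "j \<le> length w"
  shows "cstat (run (dfaV Q q0 F d) w P cs (Suc j)) = Running \<and> cinpos (run (dfaV Q q0 F d) w P cs (Suc j)) = int j + 1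
     \<and> cstate (run (dfaV Q q0 F d) w P cs (Suc j)) = foldl d q0 (take j w) + 2"
  using assms
proof (induction j)
  case 0
  show ?case
    by (simp add: run_def init_config_def step_def Let_def dfaV_def dd_def insym_def)
next
  case (Suc j)
  let ?c = "run (dfaV Q q0 F d) w P cs (Suc j)"
  have ih: "cstat ?c = Running" "cinpos ?c = int j + 1" "cstate ?c = foldl d q0 (take j w) + 2"
    using Suc by auto
  have j: "j < length w" using Suc.prems by simp
  have ins: "insym w (int j + 1) = Sym (w ! j)" unfolding insym_def using j by auto
  have tk: "foldl d q0 (take (Suc j) w) = d (foldl d q0 (take j w)) (w ! j)"
    using j by (simp add: take_Suc_conv_app_nth)
  have "run (dfaV Q q0 F d) w P cs (Suc (Suc j)) = step (dfaV Q q0 F d) w P cs ?c" by (simp add: run_def)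
  then show ?case using ih ins tk j unfolding step_def Let_def
    by (simp add: dfaV_def dd_def)
qed

lemma dfaV_final:
  "cstat (run (dfaV Q q0 F d) w P cs (Suc (Suc (length w)))) = (if foldl d q0 w \<in> F then Accepting else Rejecting)"
proof -
  let ?c = "run (dfaV Q q0 F d) w P cs (Suc (length w))"
  have ih: "cstat ?c = Running" "cinpos ?c = int (length w) + 1" "cstate ?c = foldl d q0 w + 2"
    using dfaV_exec[of "length w" w Q q0 F d P cs] by auto
  have ins: "insym w (int (length w) + 1) = REnd" unfolding insym_def by auto
  have "run (dfaV Q q0 F d) w P cs (Suc (Suc (length w))) = step (dfaV Q q0 F d) w P cs ?c" by (simp add: run_def)
  then show ?thesis using ih ins unfolding step_def Let_def
    by (simp add: dfaV_def dd_def)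
qed

lemma regular_ver:
  assumes "regular L"
  shows "\<exists>(V::'a verifier) r \<epsilon>. wf_verifier V \<and> const_space V \<and> coin_bounded V r \<and>
        \<epsilon> < 1/2 \<and> verifies V r L \<epsilon>"
proof -
  obtain Q q0 F and d :: "nat \<Rightarrow> 'a \<Rightarrow> nat" where A: "finite Q" "q0 \<in> Q" "\<forall>q\<in>Q. \<forall>a. d q a \<in> Q"
    "L = {w. foldl d q0 w \<in> F}" using assms unfolding regular_def by blast
  let ?V = "dfaV Q q0 F d"
  have cs: "const_space ?V" unfolding const_space_def by (intro exI[of _ 1] allI impI) (simp add: dfaV_cw)
  have cb: "coin_bounded ?V 0" unfolding coin_bounded_def by (simp add: dfaV_coins)
  have e0: "{bs :: bool list. length bs = 0 \<and> X} = (if X then {[]} else {})" for X by auto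
  have acc: "w \<in> L \<Longrightarrow> acc_prob ?V 0 w P = 1" for w P
  proof -
    assume "w \<in> L"
    then have "\<exists>n. cstat (run ?V w P (stream_of bs) n) = Accepting" for bs
      using dfaV_final[of Q q0 F d w P] A(4) by auto
    then show ?thesis unfolding acc_prob_def e0 by simp
  qed
  have rej: "w \<notin> L \<Longrightarrow> rej_prob ?V 0 w P = 1" for w P
  proof -
    assume "w \<notin> L"
    then have "\<exists>n. cstat (run ?V w P (stream_of bs) n) = Rejecting" for bs
      using dfaV_final[of Q q0 F d w P] A(4) by auto
    then show ?thesis unfolding rej_prob_def e0 by simp
  qed
  have vp: "valid_prover ?V (\<lambda>_ _ _. None)" unfolding valid_prover_def by simp
  have "verifies ?V 0 L 0" unfolding verifies_def
    using acc rej vp by (intro exI[of _ 0]) auto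
  then show ?thesis using dfaV_wf[OF A(1-3)] cs cb by (intro exI[of _ ?V] exI[of _ 0]) auto
qed


theorem theorem2:
  fixes L :: "('a::finite) list set"
  shows "regular L \<longleftrightarrow>
    (\<exists>(V::'a verifier) r \<epsilon>. wf_verifier V \<and> const_space V \<and> coin_bounded V r \<and>
        \<epsilon> < 1/2 \<and> verifies V r L \<epsilon>)"
proof
  assume "regular L"
  then show "\<exists>(V::'a verifier) r \<epsilon>. wf_verifier V \<and> const_space V \<and> coin_bounded V r \<and>
        \<epsilon> < 1/2 \<and> verifies V r L \<epsilon>" by (rule regular_ver)
next
  assume "\<exists>(V::'a verifier) r \<epsilon>. wf_verifier V \<and> const_space V \<and> coin_bounded V r \<and>
        \<epsilon> < 1/2 \<and> verifies V r L \<epsilon>"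
  then obtain V :: "'a verifier" and r \<epsilon> where "wf_verifier V" "const_space V" "coin_bounded V r" "verifies V r L \<epsilon>"
    by blast
  then show "regular L" by (rule ver_regular)
qed

end
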